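(* Let $d_{\mathrm{in}},d_{\mathrm{out}}\in\mathbb N$, $\Omega\subset\mathbb R^{d_{\mathrm{in}}}$, $\mu$ a measure on $\Omega$ with $C_p(\Omega,\mu)<\infty$, $\|\cdot\|$ a norm on $\mathbb R^{d_{\mathrm{out}}}$, $p,q\in[1,\infty]$, and $\mathcal F=L^p(\Omega\to(\mathbb R^{d_{\mathrm{out}}},\|\cdot\|),\mu)$. (i) There exists a constant $c>0$ (depending only on $\Omega,\mu,p,q,\|\cdot\|$) such that for every architecture $(L,\mathbf N)$ with $N_0=d_{\mathrm{in}}$, $N_L=d_{\mathrm{out}}$, of width $W=\max_{0\le\ell\le L}N_\ell$, and every $r\ge1$, $$\|R_\theta-R_{\theta'}\|_{p,\|\cdot\|}\le c\,W L^2 r^{L-1}\|\theta-\theta'\|_\infty\qquad\text{for all }\theta,\theta'\in\Theta^q_{L,\mathbf N}(r).$$ In particular, if $\Omega=[-D,D]^d$ ($D>0$, $d=d_{\mathrm{in}}$) and $\mu$ is the Lebesgue measure, this holds with $c=Dd^{1/q}+1$ when $p=\infty$ and $\|\cdot\|=\|\cdot\|_q$, and with $c=(D+1)(2D)^{d/p}$ when $\|\cdot\|=\|\cdot\|_\infty$ and $q=\infty$. (ii) Conversely, assume $\Omega\subseteq\mathbb R_+^{d_{\mathrm{in}}}$ (where $\mathbb R_+=[0,\infty)$), $\|\cdot\|=\|\cdot\|_q$, and $\mu(\{x\in\Omega: x_1\neq0\})>0$, and either $p=\infty$, or $1\le p<\infty$ and we restrict to architectures with $N_0=\min_{0\le\ell\le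 L}N_\ell$. Then there is a constant $c'>0$ independent of the architecture and of $r$ such that for every such architecture $(L,\mathbf N)$ (with $N_0=d_{\mathrm{in}}$, $N_L=d_{\mathrm{out}}$), every $r\ge1$ and every $\varepsilon>0$, there exist $\theta\neq\theta'$ in $\Theta^q_{L,\mathbf N}(r)$ with $$\|R_\theta-R_{\theta'}\|_{p,\|\cdot\|}\ge(1-\varepsilon)\,c'\,L\,r^{L-1}\|\theta-\theta'\|_\infty.$$
   Context: ReLU $\rho(x)=\max(0,x)$ coordinatewise. Architecture $(L,\mathbf N)$, $\mathbf N=(N_0,\dots,N_L)$, width $W=\max_\ell N_\ell$; parameters $\theta=(W_1,\dots,W_L,b_1,\dots,b_L)$, $W_\ell\in\mathbb R^{N_\ell\times N_{\ell-1}}$, $b_\ell\in\mathbb R^{N_\ell}$, forming $\Theta_{L,\mathbf N}$; $\|\theta\|_\infty$ is the largest absolute value of a coordinate of $\theta$. Realization: $R_\theta(x)=W_Ly_{L-1}(x)+b_L$, $y_0(x)=x$, $y_\ell(x)=\rho(W_\ell y_{\ell-1}(x)+b_\ell)$ for $1\le\ell\le L-1$. For a matrix $M$, $\|M\|_{q\to q}=\sup_{x\ne0}\|Mx\|_q/\|x\|_q$ is the operator norm. $\Theta^q_{L,\mathbf N}(r)=\{\theta\in\Theta_{L,\mathbf N}:\|W_\ell\|_{q\to q}\le r,\ \|b_\ell\|_q\le r,\ \ell=1,\dots,L\}$. $\|f\|_{p,\|\cdot\|}=(\int_\Omega\|f(x)\|^pd\mu)^{1/p}$ for $p<\infty$,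 $\operatorname{ess\,sup}_\Omega\|f(x)\|$ for $p=\infty$. $C_p(\Omega,\mu)=(\int_\Omega(\|x\|_\infty+1)^pd\mu)^{1/p}$ for $p<\infty$ and $\operatorname{ess\,sup}_\Omega\|x\|_\infty$ for $p=\infty$. *)

theory Defs
  imports "HOL-Analysis.Analysis" "HOL-Probability.Probability"
begin

text \<open>A vector of R^n is a function nat => real; only indices i < n matter
  and vectors produced below are zero outside {..<n}. Inputs x in Omega are functions nat => real whose coordinates below d_in
  are the coordinates of the point (Omega lies in the extensional product space).\<close>

type_synonym vec = "nat \<Rightarrow> real"

definition inv_exp :: "ereal \<Rightarrow> real" where
  "inv_exp q = (if q = \<infinity> then 0 else 1 / real_of_ereal q)"

definition qnorm :: "nat \<Rightarrow> ereal \<Rightarrow> vec \<Rightarrow> real" where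
  "qnorm d q x = (if q = \<infinity> then Max (insert 0 {\<bar>x i\<bar> | i. i < d})
                  else (\<Sum>i<d. \<bar>x i\<bar> powr real_of_ereal q) powr (1 / real_of_ereal q))"

definition is_norm_on :: "nat \<Rightarrow> (vec \<Rightarrow> real) \<Rightarrow> bool" where
  "is_norm_on d nrm \<longleftrightarrow>
     (\<forall>x y. (\<forall>i\<ge>d. x i = 0) \<longrightarrow> (\<forall>i\<ge>d. y i = 0) \<longrightarrow>
        nrm (\<lambda>i. x i + y i) \<le> nrm x + nrm y) \<and>
     (\<forall>x c. (\<forall>i\<ge>d. x i = 0) \<longrightarrow> nrm (\<lambda>i. c * x i) = \<bar>c\<bar> * nrm x) \<and>
     (\<forall>x. (\<forall>i\<ge>d. x i = 0) \<longrightarrow> nrm x \<ge> 0 \<and> (nrm x = 0 \<longleftrightarrow> x = (\<lambda>_. 0)))"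

definition matvec :: "nat \<Rightarrow> nat \<Rightarrow> (nat \<Rightarrow> nat \<Rightarrow> real) \<Rightarrow> vec \<Rightarrow> vec" where
  "matvec m n A x = (\<lambda>i. if i < m then (\<Sum>j<n. A i j * x j) else 0)"

definition opnorm :: "ereal \<Rightarrow> nat \<Rightarrow> nat \<Rightarrow> (nat \<Rightarrow> nat \<Rightarrow> real) \<Rightarrow> real" where
  "opnorm q m n A = Sup {qnorm m q (matvec m n A x) / qnorm n q x | x.
                          (\<forall>i\<ge>n. x i = 0) \<and> x \<noteq> (\<lambda>_. 0)}"

text \<open>Parameters: weights W l i j (layer l, row i, column j) and biases b l i.\<close>
type_synonym params = "(nat \<Rightarrow> nat \<Rightarrow> nat \<Rightarrow> real) \<times> (nat \<Rightarrow> nat \<Rightarrow> real)"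

definition arch :: "nat \<Rightarrow> (nat \<Rightarrow> nat) \<Rightarrow> nat \<Rightarrow> nat \<Rightarrow> bool" where
  "arch L N din dout \<longleftrightarrow> L \<ge> 1 \<and> (\<forall>l\<le>L. N l \<ge> 1) \<and> N 0 = din \<and> N L = dout"

definition width :: "nat \<Rightarrow> (nat \<Rightarrow> nat) \<Rightarrow> nat" where
  "width L N = Max {N l | l. l \<le> L}"

definition param_space :: "nat \<Rightarrow> (nat \<Rightarrow> nat) \<Rightarrow> params set" where
  "param_space L N = {(W, b).
      (\<forall>l i j. W l i j \<noteq> 0 \<longrightarrow> 1 \<le> l \<and> l \<le> L \<and> i < N l \<and> j < N (l - 1)) \<and>
      (\<forall>l i. b l i \<noteq> 0 \<longrightarrow> 1 \<le> l \<and> l \<le> L \<and> i < N l)}"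

definition param_sup :: "nat \<Rightarrow> (nat \<Rightarrow> nat) \<Rightarrow> params \<Rightarrow> real" where
  "param_sup L N \<theta> =
     Max ({\<bar>fst \<theta> l i j\<bar> | l i j. 1 \<le> l \<and> l \<le> L \<and> i < N l \<and> j < N (l - 1)} \<union>
          {\<bar>snd \<theta> l i\<bar> | l i. 1 \<le> l \<and> l \<le> L \<and> i < N l})"

definition param_diff :: "params \<Rightarrow> params \<Rightarrow> params" where
  "param_diff \<theta> \<theta>' = ((\<lambda>l i j. fst \<theta> l i j - fst \<theta>' l i j), (\<lambda>l i. snd \<theta> l i - snd \<theta>' l i))"

definition param_ball :: "ereal \<Rightarrow> nat \<Rightarrow> (nat \<Rightarrow> nat) \<Rightarrow> real \<Rightarrow> params set" where
  "param_ball q L N r = {\<theta> \<in> param_space L N.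
      \<forall>l. 1 \<le> l \<and> l \<le> L \<longrightarrow>
        opnorm q (N l) (N (l - 1)) (fst \<theta> l) \<le> r \<and> qnorm (N l) q (snd \<theta> l) \<le> r}"

definition affine :: "(nat \<Rightarrow> nat) \<Rightarrow> params \<Rightarrow> nat \<Rightarrow> vec \<Rightarrow> vec" where
  "affine N \<theta> l y = (\<lambda>i. if i < N l then (\<Sum>j<N (l - 1). fst \<theta> l i j * y j) + snd \<theta> l i else 0)"

fun hidden :: "(nat \<Rightarrow> nat) \<Rightarrow> params \<Rightarrow> vec \<Rightarrow> nat \<Rightarrow> vec" where
  "hidden N \<theta> x 0 = (\<lambda>i. if i < N 0 then x i else 0)"
| "hidden N \<theta> x (Suc l) = (\<lambda>i. max 0 (affine N \<theta> (Suc l) (hidden N \<theta> x l) i))"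

definition realize :: "nat \<Rightarrow> (nat \<Rightarrow> nat) \<Rightarrow> params \<Rightarrow> vec \<Rightarrow> vec" where
  "realize L N \<theta> x = affine N \<theta> L (hidden N \<theta> x (L - 1))"

definition lp_norm :: "'a measure \<Rightarrow> ereal \<Rightarrow> (vec \<Rightarrow> real) \<Rightarrow> ('a \<Rightarrow> vec) \<Rightarrow> ennreal" where
  "lp_norm M p nrm f =
     (if p = \<infinity> then esssup M (\<lambda>x. ennreal (nrm (f x)))
      else (let I = (\<integral>\<^sup>+ x. ennreal (nrm (f x) powr real_of_ereal p) \<partial>M)
            in if I = \<infinity> then \<infinity> else ennreal (enn2real I powr (1 / real_of_ereal p))))"

definition Cp :: "nat \<Rightarrow> vec measure \<Rightarrow> ereal \<Rightarrow> ennreal" where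
  "Cp din M p =
     (if p = \<infinity> then esssup M (\<lambda>x. ennreal (qnorm din \<infinity> x))
      else (let I = (\<integral>\<^sup>+ x. ennreal ((qnorm din \<infinity> x + 1) powr real_of_ereal p) \<partial>M)
            in if I = \<infinity> then \<infinity> else ennreal (enn2real I powr (1 / real_of_ereal p))))"

definition admissible_measure :: "nat \<Rightarrow> vec measure \<Rightarrow> bool" where
  "admissible_measure din M \<longleftrightarrow>
     space M \<subseteq> space (PiM {..<din} (\<lambda>_. borel)) \<and>
     sets (restrict_space (PiM {..<din} (\<lambda>_. borel)) (space M)) \<subseteq> sets M"

definition cube_lebesgue :: "nat \<Rightarrow> real \<Rightarrow> vec measure" where
  "cube_lebesgue d D = restrict_space (PiM {..<d} (\<lambda>_. lborel)) (PiE {..<d} (\<lambda>_. {-D..D}))"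

end

theory Submission
  imports Defs
begin


lemma Q_ge1: "1 \<le> q \<Longrightarrow> q \<noteq> \<infinity> \<Longrightarrow> 1 \<le> real_of_ereal q"
  by (cases q) auto

lemma inv_exp_bounds: "1 \<le> q \<Longrightarrow> 0 \<le> inv_exp q \<and> inv_exp q \<le> 1"
  using Q_ge1[of q] by (auto simp: inv_exp_def)

lemma powr_convex0:
  assumes Q: "1 \<le> (Q::real)"
  shows "convex_on {0..} (\<lambda>x. x powr Q)"
proof (rule convex_onI)
  show "convex {0::real..}" by simp
  fix t x y :: real assume t: "0 < t" "t < 1" and xy: "x \<in> {0..}" "y \<in> {0..}"
  have tp: "t powr Q \<le> t" using powr_le_one_le[of t Q] t Q by auto
  have tp': "(1-t) powr Q \<le> 1-t" using powr_le_one_le[of "1-t" Q] t Q by auto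
  show "((1 - t) *\<^sub>R x + t *\<^sub>R y) powr Q \<le> (1 - t) * x powr Q + t * y powr Q"
  proof (cases "x = 0 \<or> y = 0")
    case True
    then show ?thesis
    proof
      assume "x = 0"
      then show ?thesis using tp xy t by (simp add: powr_mult mult_right_mono)
    next
      assume "y = 0"
      then show ?thesis using tp' xy t by (simp add: powr_mult mult_right_mono)
    qed
  next
    case False
    then have "x \<in> {0<..}" "y \<in> {0<..}" using xy by auto
    from convex_onD[OF powr_convex[OF Q], of t x y, OF _ _ this] t
    show ?thesis by simp
  qed
qed

lemma qnorm_fin: "q \<noteq> \<infinity> \<Longrightarrow> qnorm n q x = (\<Sum>i<n. \<bar>x i\<bar> powr real_of_ereal q) powr (1 / real_of_ereal q)"
  by (simp add: qnorm_def)

lemma qnorm_inf: "qnorm n \<infinity> x = Max (insert 0 ((\<lambda>i. \<bar>x i\<bar>) ` {..<n}))"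
proof -
  have "{\<bar>x i\<bar> | i. i < n} = (\<lambda>i. \<bar>x i\<bar>) ` {..<n}" by auto
  then show ?thesis by (simp add: qnorm_def)
qed

lemma qnorm_nonneg: "0 \<le> qnorm n q x"
  by (cases "q = \<infinity>") (auto simp: qnorm_fin qnorm_inf intro: Max_ge)

lemma qnorm_cong: "(\<And>i. i < n \<Longrightarrow> x i = y i) \<Longrightarrow> qnorm n q x = qnorm n q y"
  by (cases "q = \<infinity>") (auto simp: qnorm_fin qnorm_inf intro!: sum.cong arg_cong[where f=Max] image_cong)

lemma qnorm_mono:
  assumes q: "1 \<le> q" and "\<And>i. i < n \<Longrightarrow> \<bar>x i\<bar> \<le> \<bar>y i\<bar>"
  shows "qnorm n q x \<le> qnorm n q y"
proof (cases "q = \<infinity>")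
  case True
  show ?thesis unfolding True qnorm_inf
  proof (rule Max.boundedI)
    fix a assume "a \<in> insert 0 ((\<lambda>i. \<bar>x i\<bar>) ` {..<n})"
    then show "a \<le> Max (insert 0 ((\<lambda>i. \<bar>y i\<bar>) ` {..<n}))"
    proof
      assume "a = 0" then show ?thesis by (auto intro: Max_ge)
    next
      assume "a \<in> (\<lambda>i. \<bar>x i\<bar>) ` {..<n}"
      then obtain i where "i < n" "a = \<bar>x i\<bar>" by auto
      then show ?thesis using assms(2)[of i] by (auto intro!: Max_ge_iff[THEN iffD2])
    qed
  qed auto
next
  case False
  show ?thesis unfolding qnorm_fin[OF False]
    using Q_ge1[OF q False] by (intro powr_mono2 sum_mono) (auto simp: assms intro: sum_nonneg)
qed

lemma qnorm_ge:
  assumes q: "1 \<le> q" and i: "i < n"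
  shows "\<bar>x i\<bar> \<le> qnorm n q x"
proof (cases "q = \<infinity>")
  case True
  then show ?thesis using i by (auto simp: qnorm_inf intro!: Max_ge)
next
  case False
  define Q where "Q = real_of_ereal q"
  have Q: "1 \<le> Q" using Q_ge1[OF q False] Q_def by simp
  have "\<bar>x i\<bar> = (\<bar>x i\<bar> powr Q) powr (1/Q)" using Q by (simp add: powr_powr)
  also have "\<dots> \<le> (\<Sum>i<n. \<bar>x i\<bar> powr Q) powr (1/Q)"
    using Q i by (intro powr_mono2) (auto intro!: member_le_sum)
  finally show ?thesis by (simp only: qnorm_fin[OF False] Q_def)
qed

lemma qnorm_zero_n: "qnorm 0 q x = 0"
  by (cases "q = \<infinity>") (auto simp: qnorm_fin qnorm_inf)

lemma qnorm_bound:
  assumes q: "1 \<le> q" and a: "0 \<le> a" and b: "\<And>i. i < n \<Longrightarrow> \<bar>x i\<bar> \<le> a"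
  shows "qnorm n q x \<le> real n powr inv_exp q * a"
proof (cases "n = 0")
  case True then show ?thesis by (simp add: qnorm_zero_n)
next
  case n: False
  show ?thesis
  proof (cases "q = \<infinity>")
    case True
    have "Max (insert 0 ((\<lambda>i. \<bar>x i\<bar>) ` {..<n})) \<le> a"
      using a b by (intro Max.boundedI) auto
    then show ?thesis using True n by (simp add: qnorm_inf inv_exp_def)
  next
    case False
    define Q where "Q = real_of_ereal q"
    have Q: "1 \<le> Q" using Q_ge1[OF q False] Q_def by simp
    have "(\<Sum>i<n. \<bar>x i\<bar> powr Q) \<le> (\<Sum>i<n. a powr Q)"
      using b Q by (intro sum_mono powr_mono2) auto
    also have "\<dots> = real n * a powr Q" by simp
    finally have "(\<Sum>i<n. \<bar>x i\<bar> powr Q) powr (1/Q) \<le> (real n * a powr Q) powr (1/Q)"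
      using Q by (intro powr_mono2) (auto intro: sum_nonneg)
    also have "\<dots> = real n powr (1/Q) * a"
      using Q a by (simp add: powr_mult powr_powr)
    finally show ?thesis using False by (simp add: qnorm_fin inv_exp_def Q_def)
  qed
qed

lemma qnorm_zero_vec: "1 \<le> q \<Longrightarrow> (\<And>i. i < n \<Longrightarrow> x i = 0) \<Longrightarrow> qnorm n q x = 0"
  using qnorm_bound[of q 0 n x] qnorm_nonneg[of n q x] by simp

lemma qnorm_pos: "1 \<le> q \<Longrightarrow> i < n \<Longrightarrow> x i \<noteq> 0 \<Longrightarrow> 0 < qnorm n q x"
  using qnorm_ge[of q i n x] by simp

lemma qnorm_holder:
  assumes q: "1 \<le> q"
  shows "(\<Sum>i<n. \<bar>x i\<bar>) \<le> real n powr (1 - inv_exp q) * qnorm n q x"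
proof (cases "n = 0")
  case True then show ?thesis by simp
next
  case n: False
  show ?thesis
  proof (cases "q = \<infinity>")
    case True
    have "(\<Sum>i<n. \<bar>x i\<bar>) \<le> real (card {..<n}) * qnorm n q x"
      by (rule sum_bounded_above) (use q in \<open>auto intro: qnorm_ge\<close>)
    then show ?thesis using True n by (simp add: inv_exp_def)
  next
    case False
    define Q where "Q = real_of_ereal q"
    have Q: "1 \<le> Q" using Q_ge1[OF q False] Q_def by simp
    define T where "T = (\<Sum>i<n. \<bar>x i\<bar> powr Q)"
    have T0: "0 \<le> T" unfolding T_def by (auto intro: sum_nonneg)
    have np: "0 < real n" using n by simp
    have "(\<Sum>i<n. (1 / real n) *\<^sub>R \<bar>x i\<bar>) powr Q \<le> (\<Sum>i<n. (1/real n) * \<bar>x i\<bar> powr Q)"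
      by (rule convex_on_sum[OF _ _ powr_convex0[OF Q]]) (use n in auto)
    then have "((\<Sum>i<n. \<bar>x i\<bar>) / real n) powr Q \<le> T / real n"
      by (simp add: T_def sum_divide_distrib[symmetric] sum_distrib_left[symmetric])
    then have "(((\<Sum>i<n. \<bar>x i\<bar>) / real n) powr Q) powr (1/Q) \<le> (T / real n) powr (1/Q)"
      using Q by (intro powr_mono2) auto
    then have "(\<Sum>i<n. \<bar>x i\<bar>) / real n \<le> T powr (1/Q) / real n powr (1/Q)"
      using Q by (simp add: powr_powr powr_divide sum_nonneg)
    then have "(\<Sum>i<n. \<bar>x i\<bar>) \<le> real n * (T powr (1/Q) / real n powr (1/Q))"
      using np by (simp add: field_simps)
    also have "\<dots> = real n powr (1 - 1/Q) * T powr (1/Q)"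
      using np by (simp add: powr_diff)
    finally show ?thesis using False by (simp add: qnorm_fin inv_exp_def Q_def T_def)
  qed
qed

lemma qnorm_triangle:
  assumes q: "1 \<le> q"
  shows "qnorm n q (\<lambda>i. x i + y i) \<le> qnorm n q x + qnorm n q y"
proof (cases "q = \<infinity>")
  case True
  show ?thesis unfolding True qnorm_inf
  proof (rule Max.boundedI)
    fix a assume "a \<in> insert 0 ((\<lambda>i. \<bar>x i + y i\<bar>) ` {..<n})"
    then show "a \<le> Max (insert 0 ((\<lambda>i. \<bar>x i\<bar>) ` {..<n})) + Max (insert 0 ((\<lambda>i. \<bar>y i\<bar>) ` {..<n}))"
    proof
      assume "a = 0" then show ?thesis
        by (metis add_nonneg_nonneg True qnorm_inf qnorm_nonneg)
    next
      assume "a \<in> (\<lambda>i. \<bar>x i + y i\<bar>) ` {..<n}"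
      then obtain i where i: "i < n" "a = \<bar>x i + y i\<bar>" by auto
      have "\<bar>x i\<bar> \<le> Max (insert 0 ((\<lambda>i. \<bar>x i\<bar>) ` {..<n}))" "\<bar>y i\<bar> \<le> Max (insert 0 ((\<lambda>i. \<bar>y i\<bar>) ` {..<n}))"
        using i by (auto intro!: Max_ge)
      then show ?thesis using i by linarith
    qed
  qed auto
next
  case False
  define Q where "Q = real_of_ereal q"
  have Q: "1 \<le> Q" using Q_ge1[OF q False] Q_def by simp
  define a where "a = qnorm n q x"
  define b where "b = qnorm n q y"
  have a0: "0 \<le> a" "0 \<le> b" unfolding a_def b_def by (auto intro: qnorm_nonneg)
  show ?thesis
  proof (cases "a = 0 \<or> b = 0")
    case True
    then show ?thesis
    proof
      assume "a = 0"
      then have "\<And>i. i < n \<Longrightarrow> x i = 0" using qnorm_ge[OF q, of _ n x] a_def by fastforce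
      then have "qnorm n q (\<lambda>i. x i + y i) = qnorm n q y" by (intro qnorm_cong) auto
      then show ?thesis using \<open>a = 0\<close> a_def by simp
    next
      assume "b = 0"
      then have "\<And>i. i < n \<Longrightarrow> y i = 0" using qnorm_ge[OF q, of _ n y] b_def by fastforce
      then have "qnorm n q (\<lambda>i. x i + y i) = qnorm n q x" by (intro qnorm_cong) auto
      then show ?thesis using \<open>b = 0\<close> b_def by simp
    qed
  next
    case False
    then have ap: "0 < a" "0 < b" using a0 by auto
    define t where "t = a / (a + b)"
    have t: "0 \<le> t" "t \<le> 1" "1 - t = b / (a+b)" using ap by (auto simp: t_def field_simps)
    have sx: "(\<Sum>i<n. \<bar>x i\<bar> powr Q) = a powr Q"
      unfolding a_def qnorm_fin[OF \<open>q \<noteq> \<infinity>\<close>] Q_def[symmetric] using Q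
      by (simp add: powr_powr sum_nonneg)
    have sy: "(\<Sum>i<n. \<bar>y i\<bar> powr Q) = b powr Q"
      unfolding b_def qnorm_fin[OF \<open>q \<noteq> \<infinity>\<close>] Q_def[symmetric] using Q
      by (simp add: powr_powr sum_nonneg)
    have key: "\<bar>x i + y i\<bar> powr Q \<le> (a+b) powr Q * (t * (\<bar>x i\<bar> powr Q / a powr Q) + (1-t) * (\<bar>y i\<bar> powr Q / b powr Q))" for i
    proof -
      have e: "\<bar>x i\<bar> + \<bar>y i\<bar> = (a+b) * ((1-t) *\<^sub>R (\<bar>y i\<bar>/b) + t *\<^sub>R (\<bar>x i\<bar>/a))"
      proof -
        have "(a+b) * (b/(a+b) * (\<bar>y i\<bar>/b)) = \<bar>y i\<bar>" "(a+b) * (a/(a+b) * (\<bar>x i\<bar>/a)) = \<bar>x i\<bar>"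
          using ap by (simp_all add: add_pos_pos[THEN less_imp_neq, symmetric] less_imp_neq[symmetric])
        then show ?thesis unfolding t(3) by (simp add: t_def distrib_left)
      qed
      have "\<bar>x i + y i\<bar> powr Q \<le> (\<bar>x i\<bar> + \<bar>y i\<bar>) powr Q"
        using Q by (intro powr_mono2) auto
      also have "\<dots> = (a+b) powr Q * ((1-t) *\<^sub>R (\<bar>y i\<bar>/b) + t *\<^sub>R (\<bar>x i\<bar>/a)) powr Q"
        by (subst e) (simp add: powr_mult)
      also have "\<dots> \<le> (a+b) powr Q * ((1-t) * (\<bar>y i\<bar>/b) powr Q + t * (\<bar>x i\<bar>/a) powr Q)"
        using convex_onD[OF powr_convex0[OF Q], of t "\<bar>y i\<bar>/b" "\<bar>x i\<bar>/a"] t ap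
        by (intro mult_left_mono) auto
      finally show ?thesis unfolding powr_divide by (simp add: algebra_simps t_def)
    qed
    have apQ: "0 < a powr Q" "0 < b powr Q" using ap by auto
    have "(\<Sum>i<n. \<bar>x i + y i\<bar> powr Q) \<le> (\<Sum>i<n. (a+b) powr Q * (t * (\<bar>x i\<bar> powr Q / a powr Q) + (1-t) * (\<bar>y i\<bar> powr Q / b powr Q)))"
      by (intro sum_mono key)
    also have "\<dots> = (a+b) powr Q * (t * ((\<Sum>i<n. \<bar>x i\<bar> powr Q) / a powr Q) + (1-t) * ((\<Sum>i<n. \<bar>y i\<bar> powr Q) / b powr Q))"
      by (simp add: sum_distrib_left sum_divide_distrib sum.distrib algebra_simps)
    also have "\<dots> = (a+b) powr Q" using apQ by (simp add: sx sy)
    finally have "(\<Sum>i<n. \<bar>x i + y i\<bar> powr Q) powr (1/Q) \<le> ((a+b) powr Q) powr (1/Q)"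
      using Q by (intro powr_mono2) (auto intro: sum_nonneg)
    also have "\<dots> = a + b" using Q ap by (simp add: powr_powr)
    finally show ?thesis by (simp only: qnorm_fin[OF \<open>q \<noteq> \<infinity>\<close>] Q_def a_def b_def)
  qed
qed


lemma matvec_trunc: "matvec m n A y = matvec m n A (\<lambda>i. if i < n then y i else 0)"
  unfolding matvec_def by (intro ext) (auto intro!: sum.cong)

lemma opnorm_apply:
  assumes q: "1 \<le> q" and op: "opnorm q m n A \<le> r" and r: "0 \<le> r"
  shows "qnorm m q (matvec m n A y) \<le> r * qnorm n q y"
proof -
  define z where "z = (\<lambda>i. if i < n then y i else 0)"
  have mz: "matvec m n A y = matvec m n A z" unfolding z_def by (rule matvec_trunc)
  have nz: "qnorm n q y = qnorm n q z" unfolding z_def by (intro qnorm_cong) auto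
  show ?thesis
  proof (cases "z = (\<lambda>_. 0)")
    case True
    have "qnorm m q (matvec m n A z) = 0"
      using q by (intro qnorm_zero_vec) (auto simp: matvec_def True)
    then show ?thesis using mz r qnorm_nonneg[of n q y] by simp
  next
    case False
    then obtain i where i: "z i \<noteq> 0" by auto
    then have "i < n" unfolding z_def by (auto split: if_splits)
    then have zpos: "0 < qnorm n q z" using qnorm_pos[OF q, of i n z] i by auto
    define S where "S = {qnorm m q (matvec m n A x) / qnorm n q x | x.
                          (\<forall>i\<ge>n. x i = 0) \<and> x \<noteq> (\<lambda>_. 0)}"
    define K where "K = (\<Sum>i<m. \<Sum>j<n. \<bar>A i j\<bar>)"
    have K0: "0 \<le> K" unfolding K_def by (auto intro!: sum_nonneg)
    have bnd: "qnorm m q (matvec m n A x) \<le> real m powr inv_exp q * (K * qnorm n q x)" for x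
    proof (rule qnorm_bound[OF q])
      show "0 \<le> K * qnorm n q x" using K0 qnorm_nonneg by auto
      fix i assume i: "i < m"
      have "\<bar>matvec m n A x i\<bar> = \<bar>\<Sum>j<n. A i j * x j\<bar>" using i by (simp add: matvec_def)
      also have "\<dots> \<le> (\<Sum>j<n. \<bar>A i j\<bar> * \<bar>x j\<bar>)" by (rule order_trans[OF sum_abs]) (simp add: abs_mult)
      also have "\<dots> \<le> (\<Sum>j<n. \<bar>A i j\<bar> * qnorm n q x)"
        by (intro sum_mono mult_left_mono qnorm_ge[OF q]) auto
      also have "\<dots> = (\<Sum>j<n. \<bar>A i j\<bar>) * qnorm n q x" by (simp add: sum_distrib_right)
      also have "\<dots> \<le> K * qnorm n q x"
        unfolding K_def using i
        by (intro mult_right_mono qnorm_nonneg member_le_sum[of i "{..<m}" "\<lambda>i. \<Sum>j<n. \<bar>A i j\<bar>"]) (auto intro: sum_nonneg)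
      finally show "\<bar>matvec m n A x i\<bar> \<le> K * qnorm n q x" .
    qed
    have "bdd_above S"
    proof (rule bdd_aboveI)
      fix s assume "s \<in> S"
      then obtain x where x: "s = qnorm m q (matvec m n A x) / qnorm n q x" by (auto simp: S_def)
      show "s \<le> real m powr inv_exp q * K"
      proof (cases "qnorm n q x = 0")
        case True then show ?thesis using x K0 by simp
      next
        case False
        then have "0 < qnorm n q x" using qnorm_nonneg[of n q x] by simp
        then show ?thesis using bnd[of x] x by (simp add: divide_le_eq mult.assoc)
      qed
    qed
    moreover have "qnorm m q (matvec m n A z) / qnorm n q z \<in> S"
      unfolding S_def using False by (auto simp: z_def intro!: exI[of _ z])
    ultimately have "qnorm m q (matvec m n A z) / qnorm n q z \<le> Sup S" by (rule cSup_upper[rotated])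
    also have "Sup S \<le> r" using op by (simp add: opnorm_def S_def)
    finally have "qnorm m q (matvec m n A z) \<le> r * qnorm n q z" using zpos by (simp add: divide_le_eq)
    then show ?thesis using mz nz by simp
  qed
qed

lemma matvec_small:
  assumes q: "1 \<le> q" and d: "0 \<le> \<delta>" and A: "\<And>i j. i < m \<Longrightarrow> j < n \<Longrightarrow> \<bar>A i j\<bar> \<le> \<delta>"
  shows "qnorm m q (matvec m n A y) \<le> real m powr inv_exp q * real n powr (1 - inv_exp q) * \<delta> * qnorm n q y"
proof -
  have "qnorm m q (matvec m n A y) \<le> real m powr inv_exp q * (real n powr (1 - inv_exp q) * \<delta> * qnorm n q y)"
  proof (rule qnorm_bound[OF q])
    show "0 \<le> real n powr (1 - inv_exp q) * \<delta> * qnorm n q y" using d qnorm_nonneg by auto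
    fix i assume i: "i < m"
    have "\<bar>matvec m n A y i\<bar> = \<bar>\<Sum>j<n. A i j * y j\<bar>" using i by (simp add: matvec_def)
    also have "\<dots> \<le> (\<Sum>j<n. \<bar>A i j\<bar> * \<bar>y j\<bar>)" by (rule order_trans[OF sum_abs]) (simp add: abs_mult)
    also have "\<dots> \<le> (\<Sum>j<n. \<delta> * \<bar>y j\<bar>)" using i A by (intro sum_mono mult_right_mono) auto
    also have "\<dots> = \<delta> * (\<Sum>j<n. \<bar>y j\<bar>)" by (simp add: sum_distrib_left)
    also have "\<dots> \<le> \<delta> * (real n powr (1 - inv_exp q) * qnorm n q y)"
      using d by (intro mult_left_mono qnorm_holder[OF q])
    finally show "\<bar>matvec m n A y i\<bar> \<le> real n powr (1 - inv_exp q) * \<delta> * qnorm n q y" by (simp add: mult_ac)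
  qed
  then show ?thesis by (simp add: mult_ac)
qed

lemma powr_mix:
  assumes "1 \<le> m" "m \<le> W" "1 \<le> n" "n \<le> W" "0 \<le> a" "a \<le> 1"
  shows "(m::real) powr a * n powr (1 - a) \<le> W"
proof -
  have "m powr a * n powr (1 - a) \<le> W powr a * W powr (1 - a)"
    using assms by (intro mult_mono powr_mono2) auto
  also have "\<dots> = W" using assms by (simp add: powr_add[symmetric])
  finally show ?thesis .
qed

lemma ball_opnorm: "\<theta> \<in> param_ball q L N r \<Longrightarrow> 1 \<le> l \<Longrightarrow> l \<le> L \<Longrightarrow> opnorm q (N l) (N (l - 1)) (fst \<theta> l) \<le> r"
  by (auto simp: param_ball_def)
lemma ball_bias: "\<theta> \<in> param_ball q L N r \<Longrightarrow> 1 \<le> l \<Longrightarrow> l \<le> L \<Longrightarrow> qnorm (N l) q (snd \<theta> l) \<le> r"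
  by (auto simp: param_ball_def)

lemma affine_growth:
  assumes q: "1 \<le> q" and th: "\<theta> \<in> param_ball q L N r" and l: "1 \<le> l" "l \<le> L" and r: "0 \<le> r"
  shows "qnorm (N l) q (affine N \<theta> l y) \<le> r * qnorm (N (l-1)) q y + r"
proof -
  have "qnorm (N l) q (affine N \<theta> l y) = qnorm (N l) q (\<lambda>i. matvec (N l) (N (l-1)) (fst \<theta> l) y i + snd \<theta> l i)"
    by (intro qnorm_cong) (simp add: affine_def matvec_def)
  also have "\<dots> \<le> qnorm (N l) q (matvec (N l) (N (l-1)) (fst \<theta> l) y) + qnorm (N l) q (snd \<theta> l)"
    by (rule qnorm_triangle[OF q])
  also have "\<dots> \<le> r * qnorm (N (l-1)) q y + r"
    using opnorm_apply[OF q ball_opnorm[OF th l] r, of y] ball_bias[OF th l] by linarith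
  finally show ?thesis .
qed

lemma affine_diff:
  assumes q: "1 \<le> q" and th: "\<theta> \<in> param_ball q L N r" and l: "1 \<le> l" "l \<le> L" and r: "0 \<le> r"
    and d: "0 \<le> \<delta>"
    and dW: "\<And>i j. i < N l \<Longrightarrow> j < N (l-1) \<Longrightarrow> \<bar>fst \<theta> l i j - fst \<theta>' l i j\<bar> \<le> \<delta>"
    and db: "\<And>i. i < N l \<Longrightarrow> \<bar>snd \<theta> l i - snd \<theta>' l i\<bar> \<le> \<delta>"
    and W: "1 \<le> N l" "N l \<le> Wd" "1 \<le> N (l-1)" "N (l-1) \<le> Wd"
  shows "qnorm (N l) q (\<lambda>i. affine N \<theta> l y i - affine N \<theta>' l y' i)
           \<le> r * qnorm (N (l-1)) q (\<lambda>i. y i - y' i) + real Wd * \<delta> * (qnorm (N (l-1)) q y' + 1)"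
proof -
  define m where "m = N l"
  define n where "n = N (l-1)"
  define A where "A = fst \<theta> l"
  define B where "B = (\<lambda>i j. fst \<theta> l i j - fst \<theta>' l i j)"
  define c where "c = (\<lambda>i. snd \<theta> l i - snd \<theta>' l i)"
  have iv: "0 \<le> inv_exp q" "inv_exp q \<le> 1" using inv_exp_bounds[OF q] by auto
  have mix: "real m powr inv_exp q * real n powr (1 - inv_exp q) \<le> real Wd"
    using W iv unfolding m_def n_def by (intro powr_mix) auto
  have mW: "real m powr inv_exp q \<le> real Wd"
  proof -
    have "real m powr inv_exp q \<le> real m powr 1" using W iv unfolding m_def by (intro powr_mono) auto
    then show ?thesis using W unfolding m_def by simp
  qed
  have "qnorm m q (\<lambda>i. affine N \<theta> l y i - affine N \<theta>' l y' i)
      = qnorm m q (\<lambda>i. matvec m n A (\<lambda>j. y j - y' j) i + (matvec m n B y' i + c i))"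
    by (intro qnorm_cong)
       (simp add: affine_def matvec_def m_def n_def A_def B_def c_def sum.distrib[symmetric] algebra_simps)
  also have "\<dots> \<le> qnorm m q (matvec m n A (\<lambda>j. y j - y' j)) + qnorm m q (\<lambda>i. matvec m n B y' i + c i)"
    by (rule qnorm_triangle[OF q])
  also have "qnorm m q (\<lambda>i. matvec m n B y' i + c i) \<le> qnorm m q (matvec m n B y') + qnorm m q c"
    by (rule qnorm_triangle[OF q])
  also have "qnorm m q (matvec m n A (\<lambda>j. y j - y' j)) \<le> r * qnorm n q (\<lambda>j. y j - y' j)"
    unfolding m_def n_def A_def by (rule opnorm_apply[OF q ball_opnorm[OF th l] r])
  also have "qnorm m q (matvec m n B y') \<le> real m powr inv_exp q * real n powr (1 - inv_exp q) * \<delta> * qnorm n q y'"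
    by (rule matvec_small[OF q d]) (use dW in \<open>auto simp: B_def m_def n_def\<close>)
  also have "\<dots> \<le> real Wd * \<delta> * qnorm n q y'"
    using mix d qnorm_nonneg[of n q y'] by (intro mult_right_mono) auto
  also have "qnorm m q c \<le> real m powr inv_exp q * \<delta>"
    by (rule qnorm_bound[OF q d]) (use db in \<open>auto simp: c_def m_def\<close>)
  also have "\<dots> \<le> real Wd * \<delta>" using mW d by (intro mult_right_mono) auto
  finally show ?thesis by (simp add: m_def n_def algebra_simps)
qed


lemma width_ge: "l \<le> L \<Longrightarrow> N l \<le> width L N"
  unfolding width_def by (rule Max_ge) auto

lemma finite_S1: fixes L :: nat and N :: "nat \<Rightarrow> nat" shows "finite {f l i j | l i j. 1 \<le> l \<and> l \<le> L \<and> i < N l \<and> j < N (l - 1)}"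
proof -
  have "{f l i j | l i j. 1 \<le> l \<and> l \<le> L \<and> i < N l \<and> j < N (l - 1)}
        \<subseteq> (\<lambda>(l,i,j). f l i j) ` (SIGMA l:{..L}. SIGMA i:{..<N l}. {..<N (l-1)})" by (auto intro!: rev_image_eqI)
  moreover have "finite (SIGMA l:{..L}. SIGMA i:{..<N l}. {..<N (l-1)})" by (intro finite_SigmaI) auto
  ultimately show ?thesis by (meson finite_subset finite_imageI)
qed

lemma finite_S2: fixes L :: nat and N :: "nat \<Rightarrow> nat" shows "finite {f l i | l i. 1 \<le> l \<and> l \<le> L \<and> i < N l}"
proof -
  have "{f l i | l i. 1 \<le> l \<and> l \<le> L \<and> i < N l}
        \<subseteq> (\<lambda>(l,i). f l i) ` (SIGMA l:{..L}. {..<N l})" by (auto intro!: rev_image_eqI)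
  moreover have "finite (SIGMA l:{..L}. {..<N l})" by (intro finite_SigmaI) auto
  ultimately show ?thesis by (meson finite_subset finite_imageI)
qed

lemma ps_W: "1 \<le> l \<Longrightarrow> l \<le> L \<Longrightarrow> i < N l \<Longrightarrow> j < N (l-1) \<Longrightarrow>
    \<bar>fst \<theta> l i j - fst \<theta>' l i j\<bar> \<le> param_sup L N (param_diff \<theta> \<theta>')"
  unfolding param_sup_def param_diff_def
  by (rule Max_ge[OF finite_UnI[OF finite_S1 finite_S2]]) auto

lemma ps_b: "1 \<le> l \<Longrightarrow> l \<le> L \<Longrightarrow> i < N l \<Longrightarrow>
    \<bar>snd \<theta> l i - snd \<theta>' l i\<bar> \<le> param_sup L N (param_diff \<theta> \<theta>')"
  unfolding param_sup_def param_diff_def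
  by (rule Max_ge[OF finite_UnI[OF finite_S1 finite_S2]]) auto

lemma ps_nonneg: "arch L N din dout \<Longrightarrow> 0 \<le> param_sup L N (param_diff \<theta> \<theta>')"
  using ps_b[of 1 L 0 N \<theta> \<theta>'] by (auto simp: arch_def)

lemma relu_mono: "\<bar>max 0 (a::real)\<bar> \<le> \<bar>a\<bar>" by auto
lemma relu_lip: "\<bar>max 0 (a::real) - max 0 b\<bar> \<le> \<bar>a - b\<bar>" by auto

context
  fixes L :: nat and N :: "nat \<Rightarrow> nat" and din dout :: nat and q :: ereal and r :: real and x :: vec
  assumes ar: "arch L N din dout" and q: "1 \<le> q" and r: "1 \<le> r"
begin

lemma hid_growth: "\<theta> \<in> param_ball q L N r \<Longrightarrow> l < L \<Longrightarrow> qnorm (N l) q (hidden N \<theta> x l) \<le> r ^ l * (qnorm din q x + real l)"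
proof (induction l)
  case 0
  have "qnorm (N 0) q (hidden N \<theta> x 0) = qnorm din q x"
    using ar by (auto simp: arch_def intro!: qnorm_cong)
  then show ?case by simp
next
  case (Suc l)
  define nx where "nx = qnorm din q x"
  have nx0: "0 \<le> nx" unfolding nx_def by (rule qnorm_nonneg)
  have IH: "qnorm (N l) q (hidden N \<theta> x l) \<le> r ^ l * (nx + real l)" using Suc nx_def by simp
  have "qnorm (N (Suc l)) q (hidden N \<theta> x (Suc l)) \<le> qnorm (N (Suc l)) q (affine N \<theta> (Suc l) (hidden N \<theta> x l))"
    by (simp add: qnorm_mono[OF q] relu_mono)
  also have "\<dots> \<le> r * qnorm (N l) q (hidden N \<theta> x l) + r"
    using affine_growth[OF q Suc.prems(1), of "Suc l"] Suc r by simp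
  also have "\<dots> \<le> r * (r ^ l * (nx + real l)) + r ^ Suc l"
    using IH r by (intro add_mono mult_left_mono) (auto intro: one_le_power order_trans[OF _ power_increasing[of 1 "Suc l" r]])
  also have "\<dots> = r ^ Suc l * (nx + real (Suc l))" by (simp add: algebra_simps)
  finally show ?case unfolding nx_def .
qed

lemma step_conds:
  assumes l: "1 \<le> l" "l \<le> L"
  shows "\<And>i j. i < N l \<Longrightarrow> j < N (l-1) \<Longrightarrow> \<bar>fst \<theta> l i j - fst \<theta>' l i j\<bar> \<le> param_sup L N (param_diff \<theta> \<theta>')"
    and "\<And>i. i < N l \<Longrightarrow> \<bar>snd \<theta> l i - snd \<theta>' l i\<bar> \<le> param_sup L N (param_diff \<theta> \<theta>')"
    and "1 \<le> N l" "N l \<le> width L N" "1 \<le> N (l-1)" "N (l-1) \<le> width L N"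
  using l ar by (auto intro: ps_W ps_b width_ge simp: arch_def)

lemma hid_diff:
  assumes th: "\<theta> \<in> param_ball q L N r" and th': "\<theta>' \<in> param_ball q L N r"
  shows "l < L \<Longrightarrow> r * qnorm (N l) q (\<lambda>i. hidden N \<theta> x l i - hidden N \<theta>' x l i)
     \<le> real (width L N) * param_sup L N (param_diff \<theta> \<theta>') * real l * r ^ l * (qnorm din q x + real l)"
proof (induction l)
  case 0
  have "qnorm (N 0) q (\<lambda>i. hidden N \<theta> x 0 i - hidden N \<theta>' x 0 i) = 0"
    using q by (intro qnorm_zero_vec) auto
  then show ?case by simp
next
  case (Suc l)
  define K where "K = real (width L N) * param_sup L N (param_diff \<theta> \<theta>')"
  define nx where "nx = qnorm din q x"
  define E where "E = qnorm (N l) q (\<lambda>i. hidden N \<theta> x l i - hidden N \<theta>' x l i)"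
  define A where "A = r ^ l"
  define X where "X = nx + real l"
  have K0: "0 \<le> K" unfolding K_def using ps_nonneg[OF ar] by simp
  have A1: "1 \<le> A" unfolding A_def using r by (simp add: one_le_power)
  have X0: "0 \<le> X" unfolding X_def nx_def using qnorm_nonneg[of din q x] by simp
  have E0: "0 \<le> E" unfolding E_def by (rule qnorm_nonneg)
  have IH: "r * E \<le> K * real l * A * X" using Suc unfolding K_def E_def A_def X_def nx_def by simp
  have G: "qnorm (N l) q (hidden N \<theta>' x l) \<le> A * X"
    using hid_growth[OF th', of l] Suc unfolding A_def X_def nx_def by simp
  have "qnorm (N (Suc l)) q (\<lambda>i. hidden N \<theta> x (Suc l) i - hidden N \<theta>' x (Suc l) i)
      \<le> qnorm (N (Suc l)) q (\<lambda>i. affine N \<theta> (Suc l) (hidden N \<theta> x l) i - affine N \<theta>' (Suc l) (hidden N \<theta>' x l) i)"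
    by (simp add: qnorm_mono[OF q] relu_lip)
  also have "\<dots> \<le> r * E + K * (qnorm (N l) q (hidden N \<theta>' x l) + 1)"
    using affine_diff[OF q th, where l="Suc l" and \<delta>="param_sup L N (param_diff \<theta> \<theta>')" and \<theta>'=\<theta>' and Wd="width L N"]
      step_conds[of "Suc l"] Suc.prems r ps_nonneg[OF ar]
    unfolding E_def K_def by simp
  also have "\<dots> \<le> r * E + K * (A * X + 1)"
    using G K0 by (intro add_left_mono mult_left_mono) auto
  finally have E': "qnorm (N (Suc l)) q (\<lambda>i. hidden N \<theta> x (Suc l) i - hidden N \<theta>' x (Suc l) i) \<le> r * E + K * (A * X + 1)" .
  have "r * qnorm (N (Suc l)) q (\<lambda>i. hidden N \<theta> x (Suc l) i - hidden N \<theta>' x (Suc l) i) \<le> r * (r * E + K * (A * X + 1))"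
    using E' r by (intro mult_left_mono) auto
  also have "\<dots> = r * (r * E) + r * K * A * X + r * K" by (simp add: algebra_simps)
  also have "\<dots> \<le> r * (K * real l * A * X) + r * K * A * X + r * K * A * (real l + 1)"
  proof -
    have "r * (r * E) \<le> r * (K * real l * A * X)" using IH r by (intro mult_left_mono) auto
    moreover have "r * K \<le> r * K * A * (real l + 1)"
    proof -
      have "r * K * 1 \<le> r * K * (A * (real l + 1))"
        using A1 K0 r by (intro mult_left_mono) (auto intro: order_trans[OF A1] simp: algebra_simps)
      then show ?thesis by (simp add: mult_ac)
    qed
    ultimately show ?thesis by linarith
  qed
  also have "\<dots> = K * real (Suc l) * (r * A) * (X + 1)" by (simp add: algebra_simps)
  finally show ?case unfolding K_def A_def X_def nx_def by (simp add: algebra_simps)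
qed

lemma core:
  assumes th: "\<theta> \<in> param_ball q L N r" and th': "\<theta>' \<in> param_ball q L N r"
  shows "qnorm dout q (realize L N \<theta> x - realize L N \<theta>' x)
     \<le> real (width L N) * real L ^ 2 * r ^ (L - 1) * param_sup L N (param_diff \<theta> \<theta>') * (qnorm din q x + 1)"
proof -
  obtain m where Lm: "L = Suc m" using ar by (cases L) (auto simp: arch_def)
  define K where "K = real (width L N) * param_sup L N (param_diff \<theta> \<theta>')"
  define nx where "nx = qnorm din q x"
  define E where "E = qnorm (N m) q (\<lambda>i. hidden N \<theta> x m i - hidden N \<theta>' x m i)"
  define A where "A = r ^ m"
  define X where "X = nx + real m"
  have K0: "0 \<le> K" unfolding K_def using ps_nonneg[OF ar] by simp
  have A1: "1 \<le> A" unfolding A_def using r by (simp add: one_le_power)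
  have nx0: "0 \<le> nx" unfolding nx_def using qnorm_nonneg[of din q x] by simp
  have IH: "r * E \<le> K * real m * A * X" using hid_diff[OF th th', of m] Lm unfolding K_def E_def A_def X_def nx_def by simp
  have G: "qnorm (N m) q (hidden N \<theta>' x m) \<le> A * X"
    using hid_growth[OF th', of m] Lm unfolding A_def X_def nx_def by simp
  have "qnorm dout q (realize L N \<theta> x - realize L N \<theta>' x)
      = qnorm (N L) q (\<lambda>i. affine N \<theta> L (hidden N \<theta> x m) i - affine N \<theta>' L (hidden N \<theta>' x m) i)"
    using ar Lm by (simp add: arch_def realize_def fun_diff_def)
  also have "\<dots> \<le> r * E + K * (qnorm (N m) q (hidden N \<theta>' x m) + 1)"
    using affine_diff[OF q th, where l=L and \<delta>="param_sup L N (param_diff \<theta> \<theta>')" and \<theta>'=\<theta>' and Wd="width L N"]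
      step_conds[of L] Lm r ps_nonneg[OF ar]
    unfolding E_def K_def by simp
  also have "\<dots> \<le> K * real m * A * X + K * (A * X + 1)"
    using G K0 IH by (intro add_mono mult_left_mono) auto
  also have "\<dots> = K * (real m + 1) * A * X + K" by (simp add: algebra_simps)
  also have "\<dots> \<le> K * (real m + 1) * A * X + K * A * ((real m + 1)^2 - (real m + 1) * real m)"
  proof -
    have "(real m + 1)^2 - (real m + 1) * real m = real m + 1" by (simp add: power2_eq_square algebra_simps)
    then have "K * 1 \<le> K * (A * ((real m + 1)^2 - (real m + 1) * real m))"
      using A1 K0 by (intro mult_left_mono) (auto intro: order_trans[OF A1] simp: algebra_simps)
    then show ?thesis by (simp add: mult_ac)
  qed
  also have "\<dots> = K * A * ((real m + 1) * nx + (real m + 1)^2)"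
    unfolding X_def by (simp add: power2_eq_square algebra_simps)
  also have "\<dots> \<le> K * A * ((real m + 1)^2 * nx + (real m + 1)^2)"
  proof -
    have "(real m + 1) * nx \<le> (real m + 1)^2 * nx"
      using nx0 by (intro mult_right_mono) (auto simp: power2_eq_square)
    then show ?thesis using K0 A1 by (intro mult_left_mono) auto
  qed
  also have "\<dots> = real (width L N) * real L ^ 2 * r ^ (L - 1) * param_sup L N (param_diff \<theta> \<theta>') * (nx + 1)"
    unfolding K_def A_def Lm by (simp add: algebra_simps)
  finally show ?thesis unfolding nx_def .
qed

end


lemma coord_meas:
  assumes adm: "admissible_measure din M" and i: "i < din"
  shows "(\<lambda>x. x i) \<in> borel_measurable M"
proof -
  let ?P = "PiM {..<din} (\<lambda>_. borel :: real measure)"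
  have "(\<lambda>x. x i) \<in> borel_measurable (restrict_space ?P (space M))"
    by (rule measurable_restrict_space1) (use i in simp)
  moreover have "measurable (restrict_space ?P (space M)) (borel :: real measure) \<subseteq> measurable M borel"
    using adm unfolding admissible_measure_def
    by (intro measurable_mono) (auto simp: space_restrict_space)
  ultimately show ?thesis by blast
qed

lemma hidden_meas:
  assumes adm: "admissible_measure din M" and N0: "N 0 = din"
  shows "(\<lambda>x. hidden N \<theta> x l i) \<in> borel_measurable M"
proof (induction l arbitrary: i)
  case 0
  show ?case using coord_meas[OF adm, of i] N0 by (cases "i < din") auto
next
  case (Suc l)
  note Suc[measurable]
  show ?case unfolding hidden.simps affine_def by measurable
qed

lemma realize_meas:
  assumes adm: "admissible_measure din M" and N0: "N 0 = din"
  shows "(\<lambda>x. realize L N \<theta> x i - realize L N \<theta>' x i) \<in> borel_measurable M"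
proof -
  note hidden_meas[where M=M and N=N, OF adm N0, measurable]
  show ?thesis unfolding realize_def affine_def by measurable
qed

lemma lip_cont:
  fixes F :: "vec \<Rightarrow> real"
  assumes lip: "\<And>u v. \<bar>F u - F v\<bar> \<le> K * (\<Sum>i<n. \<bar>u i - v i\<bar>)"
  shows "continuous_on UNIV F"
proof -
  have "isCont F u" for u
  proof -
    have c: "((\<lambda>v::vec. v i) \<longlongrightarrow> u i) (at u)" for i
      using continuous_on_eq_continuous_at[of UNIV "\<lambda>v::vec. v i"] continuous_on_product_coordinates
      by (simp add: isCont_def)
    have "((\<lambda>v. K * (\<Sum>i<n. \<bar>v i - u i\<bar>)) \<longlongrightarrow> K * (\<Sum>i<n. \<bar>u i - u i\<bar>)) (at u)"
      by (intro tendsto_intros c)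
    then have g: "((\<lambda>v. K * (\<Sum>i<n. \<bar>v i - u i\<bar>)) \<longlongrightarrow> 0) (at u)" by simp
    have "((\<lambda>v. F v - F u) \<longlongrightarrow> 0) (at u)"
      by (rule Lim_null_comparison[OF _ g]) (use lip in auto)
    then show ?thesis unfolding isCont_def by (simp add: LIM_zero_iff)
  qed
  then show ?thesis by (simp add: continuous_on_eq_continuous_at)
qed

lemma lip_meas:
  fixes F :: "vec \<Rightarrow> real" and f :: "'a \<Rightarrow> vec"
  assumes lip: "\<And>u v. \<bar>F u - F v\<bar> \<le> K * (\<Sum>i<n. \<bar>u i - v i\<bar>)"
    and f: "\<And>i. (\<lambda>x. f x i) \<in> borel_measurable M"
  shows "(\<lambda>x. F (f x)) \<in> borel_measurable M"
proof -
  have "f \<in> borel_measurable M" by (rule measurable_coordinatewise_then_product) (rule f)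
  moreover have "F \<in> borel_measurable borel" by (rule borel_measurable_continuous_onI[OF lip_cont[OF lip]])
  ultimately show ?thesis by (rule measurable_compose)
qed

lemma qnorm_le_n_sum: "1 \<le> q \<Longrightarrow> qnorm n q w \<le> real n * (\<Sum>i<n. \<bar>w i\<bar>)"
proof -
  assume q: "1 \<le> q"
  have "qnorm n q w \<le> real n powr inv_exp q * (\<Sum>i<n. \<bar>w i\<bar>)"
    by (rule qnorm_bound[OF q]) (auto intro: sum_nonneg member_le_sum)
  also have "\<dots> \<le> real n * (\<Sum>i<n. \<bar>w i\<bar>)"
  proof (cases "n = 0")
    case False
    have "real n powr inv_exp q \<le> real n powr 1"
      using False inv_exp_bounds[OF q] by (intro powr_mono) auto
    then show ?thesis using False by (intro mult_right_mono) (auto intro: sum_nonneg)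
  qed simp
  finally show ?thesis .
qed

lemma qnorm_lip: "1 \<le> q \<Longrightarrow> \<bar>qnorm n q u - qnorm n q v\<bar> \<le> real n * (\<Sum>i<n. \<bar>u i - v i\<bar>)"
proof -
  assume q: "1 \<le> q"
  have a: "qnorm n q u \<le> qnorm n q v + qnorm n q (\<lambda>i. u i - v i)"
    using qnorm_triangle[OF q, of n v "\<lambda>i. u i - v i"] by simp
  have b: "qnorm n q v \<le> qnorm n q u + qnorm n q (\<lambda>i. u i - v i)"
  proof -
    have "qnorm n q v \<le> qnorm n q u + qnorm n q (\<lambda>i. v i - u i)"
      using qnorm_triangle[OF q, of n u "\<lambda>i. v i - u i"] by simp
    also have "qnorm n q (\<lambda>i. v i - u i) = qnorm n q (\<lambda>i. u i - v i)"
      by (intro antisym qnorm_mono[OF q]) (simp_all add: abs_minus_commute)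
    finally show ?thesis .
  qed
  have "qnorm n q (\<lambda>i. u i - v i) \<le> real n * (\<Sum>i<n. \<bar>u i - v i\<bar>)" by (rule qnorm_le_n_sum[OF q])
  then show ?thesis using a b by linarith
qed


definition ev :: "nat \<Rightarrow> vec" where "ev i = (\<lambda>j. if j = i then 1 else 0)"

lemma nrm_zero: "is_norm_on d nrm \<Longrightarrow> nrm (\<lambda>_. 0) = 0"
  unfolding is_norm_on_def by auto

lemma nrm_nonneg: "is_norm_on d nrm \<Longrightarrow> (\<forall>i\<ge>d. w i = 0) \<Longrightarrow> 0 \<le> nrm w"
  unfolding is_norm_on_def by auto

lemma nrm_le_sum:
  assumes nrm: "is_norm_on d nrm" and w: "\<forall>i\<ge>d. w i = 0"
  shows "nrm w \<le> (\<Sum>i<d. \<bar>w i\<bar> * nrm (ev i))"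
proof -
  have "k \<le> d \<Longrightarrow> nrm (\<lambda>j. if j < k then w j else 0) \<le> (\<Sum>i<k. \<bar>w i\<bar> * nrm (ev i))" for k
  proof (induction k)
    case 0 then show ?case using nrm_zero[OF nrm] by simp
  next
    case (Suc k)
    have eq: "(\<lambda>j. if j < Suc k then w j else 0) = (\<lambda>j. (if j < k then w j else 0) + (\<lambda>j. w k * ev k j) j)"
      by (auto simp: ev_def fun_eq_iff less_Suc_eq)
    have "nrm (\<lambda>j. if j < Suc k then w j else 0) \<le> nrm (\<lambda>j. if j < k then w j else 0) + nrm (\<lambda>j. w k * ev k j)"
      unfolding eq using nrm Suc.prems unfolding is_norm_on_def
      by (intro conjunct1[OF nrm[unfolded is_norm_on_def], rule_format]) (auto simp: ev_def)
    also have "nrm (\<lambda>j. w k * ev k j) = \<bar>w k\<bar> * nrm (ev k)"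
      using nrm Suc.prems unfolding is_norm_on_def by (auto simp: ev_def)
    finally show ?case using Suc by simp
  qed
  from this[of d] have "nrm (\<lambda>j. if j < d then w j else 0) \<le> (\<Sum>i<d. \<bar>w i\<bar> * nrm (ev i))" by simp
  moreover have "(\<lambda>j. if j < d then w j else 0) = w" using w by (auto simp: not_less)
  ultimately show ?thesis by simp
qed

definition Cn :: "nat \<Rightarrow> (vec \<Rightarrow> real) \<Rightarrow> real" where "Cn d nrm = (\<Sum>i<d. nrm (ev i))"

lemma ev_nonneg: "is_norm_on d nrm \<Longrightarrow> i < d \<Longrightarrow> 0 \<le> nrm (ev i)"
  by (rule nrm_nonneg) (auto simp: ev_def)

lemma Cn_nonneg: "is_norm_on d nrm \<Longrightarrow> 0 \<le> Cn d nrm"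
  unfolding Cn_def by (auto intro!: sum_nonneg ev_nonneg)

lemma nrm_le_Cn:
  assumes nrm: "is_norm_on d nrm" and w: "\<forall>i\<ge>d. w i = 0"
  shows "nrm w \<le> Cn d nrm * (\<Sum>i<d. \<bar>w i\<bar>)"
proof -
  have "nrm w \<le> (\<Sum>i<d. \<bar>w i\<bar> * nrm (ev i))" by (rule nrm_le_sum[OF nrm w])
  also have "\<dots> \<le> (\<Sum>i<d. \<bar>w i\<bar> * Cn d nrm)"
    unfolding Cn_def using ev_nonneg[OF nrm]
    by (intro sum_mono mult_left_mono member_le_sum[of _ "{..<d}" "\<lambda>i. nrm (ev i)"]) auto
  also have "(\<Sum>i<d. \<bar>w i\<bar> * Cn d nrm) = Cn d nrm * (\<Sum>i<d. \<bar>w i\<bar>)"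
    unfolding sum_distrib_left by (simp add: mult.commute)
  finally show ?thesis .
qed

lemma nrm_le_qnorm:
  assumes nrm: "is_norm_on d nrm" and w: "\<forall>i\<ge>d. w i = 0" and q: "1 \<le> q"
  shows "nrm w \<le> Cn d nrm * qnorm d q w"
proof -
  have "nrm w \<le> (\<Sum>i<d. \<bar>w i\<bar> * nrm (ev i))" by (rule nrm_le_sum[OF nrm w])
  also have "\<dots> \<le> (\<Sum>i<d. qnorm d q w * nrm (ev i))"
    using ev_nonneg[OF nrm] by (intro sum_mono mult_right_mono qnorm_ge[OF q]) auto
  also have "(\<Sum>i<d. qnorm d q w * nrm (ev i)) = Cn d nrm * qnorm d q w"
    unfolding Cn_def sum_distrib_right by (simp add: mult.commute)
  finally show ?thesis .
qed

lemma nrm_lip: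
  assumes nrm: "is_norm_on d nrm"
  shows "\<bar>nrm (\<lambda>i. if i < d then u i else 0) - nrm (\<lambda>i. if i < d then v i else 0)\<bar>
          \<le> Cn d nrm * (\<Sum>i<d. \<bar>u i - v i\<bar>)"
proof -
  have tri: "nrm (\<lambda>i. if i < d then a i else 0) \<le> nrm (\<lambda>i. if i < d then b i else 0) + Cn d nrm * (\<Sum>i<d. \<bar>a i - b i\<bar>)" for a b
  proof -
    have "nrm (\<lambda>i. if i < d then a i else 0) = nrm (\<lambda>i. (if i < d then b i else 0) + (if i < d then a i - b i else 0))"
      by (intro arg_cong[where f=nrm]) auto
    also have "\<dots> \<le> nrm (\<lambda>i. if i < d then b i else 0) + nrm (\<lambda>i. if i < d then a i - b i else 0)"
      by (rule conjunct1[OF nrm[unfolded is_norm_on_def], rule_format]) auto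
    also have "nrm (\<lambda>i. if i < d then a i - b i else 0) \<le> Cn d nrm * (\<Sum>i<d. \<bar>if i < d then a i - b i else 0\<bar>)"
      by (rule nrm_le_Cn[OF nrm]) auto
    also have "(\<Sum>i<d. \<bar>if i < d then a i - b i else 0\<bar>) = (\<Sum>i<d. \<bar>a i - b i\<bar>)" by (intro sum.cong) auto
    finally show ?thesis by simp
  qed
  have "Cn d nrm * (\<Sum>i<d. \<bar>v i - u i\<bar>) = Cn d nrm * (\<Sum>i<d. \<bar>u i - v i\<bar>)" by (simp add: abs_minus_commute)
  then show ?thesis using tri[of u v] tri[of v u] by linarith
qed

lemma realize_supp: "arch L N din dout \<Longrightarrow> \<forall>i\<ge>dout. (realize L N \<theta> x - realize L N \<theta>' x) i = 0"
  by (auto simp: arch_def realize_def affine_def)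

lemma qnorm_inf_bound: "1 \<le> q \<Longrightarrow> qnorm d q x \<le> (real d + 1) * qnorm d \<infinity> x"
proof -
  assume q: "1 \<le> q"
  have "qnorm d q x \<le> real d powr inv_exp q * qnorm d \<infinity> x"
    by (rule qnorm_bound[OF q qnorm_nonneg]) (rule qnorm_ge, auto)
  also have "\<dots> \<le> (real d + 1) * qnorm d \<infinity> x"
  proof (intro mult_right_mono qnorm_nonneg)
    show "real d powr inv_exp q \<le> real d + 1"
    proof (cases "d = 0")
      case False
      then have "real d powr inv_exp q \<le> real d powr 1" using inv_exp_bounds[OF q] by (intro powr_mono) auto
      then show ?thesis using False by simp
    qed simp
  qed
  finally show ?thesis .
qed

lemma qinf_meas:
  assumes adm: "admissible_measure din M"
  shows "(\<lambda>x. qnorm din \<infinity> x) \<in> borel_measurable M"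
proof -
  have "(\<lambda>x. qnorm din \<infinity> ((\<lambda>x. \<lambda>i. if i < din then x i else 0) x)) \<in> borel_measurable M"
    apply (rule lip_meas[OF qnorm_lip])
    subgoal by simp
    subgoal for i by (cases "i < din") (simp_all add: coord_meas[OF adm])
    done
  moreover have "qnorm din \<infinity> ((\<lambda>x. \<lambda>i. if i < din then x i else 0) x) = qnorm din \<infinity> x" for x
    by (intro qnorm_cong) auto
  ultimately show ?thesis by simp
qed


lemma lp_general:
  fixes M :: "vec measure" and f :: "vec \<Rightarrow> vec"
  assumes adm: "admissible_measure din M" and p: "1 \<le> p" and Cp: "Cp din M p < \<infinity>"
    and nn: "\<And>x. x \<in> space M \<Longrightarrow> 0 \<le> nrm (f x)"
    and le: "\<And>x. x \<in> space M \<Longrightarrow> nrm (f x) \<le> K * (qnorm din \<infinity> x + 1)" and K: "0 \<le> K"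
    and meas: "p = \<infinity> \<Longrightarrow> (\<lambda>x. nrm (f x)) \<in> borel_measurable M"
  shows "lp_norm M p nrm f \<le> ennreal (K * (enn2real (Cp din M p) + 1))"
proof (cases "p = \<infinity>")
  case True
  define C0 where "C0 = enn2real (Cp din M p)"
  have CC: "Cp din M p = ennreal C0" unfolding C0_def using Cp by simp
  have "AE x in M. ennreal (qnorm din \<infinity> x) \<le> ennreal C0"
    using esssup_AE[of "\<lambda>x. ennreal (qnorm din \<infinity> x)" M] CC True by (simp add: Cp_def)
  then have AEh: "AE x in M. qnorm din \<infinity> x \<le> C0"
    by (rule AE_mp) (auto simp: C0_def)
  have "AE x in M. ennreal (nrm (f x)) \<le> ennreal (K * (C0 + 1))"
    using AEh AE_space
  proof eventually_elim
    case (elim x)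
    have "nrm (f x) \<le> K * (qnorm din \<infinity> x + 1)" using le elim by simp
    also have "\<dots> \<le> K * (C0 + 1)" using K elim by (intro mult_left_mono) auto
    finally show ?case by (rule ennreal_leI)
  qed
  moreover note meas[OF True, measurable]
  ultimately have "esssup M (\<lambda>x. ennreal (nrm (f x))) \<le> ennreal (K * (C0 + 1))"
    by (intro esssup_I) auto
  then show ?thesis using True by (simp add: lp_norm_def C0_def)
next
  case False
  define P where "P = real_of_ereal p"
  have P: "1 \<le> P" using Q_ge1[OF p False] P_def by simp
  define I0 where "I0 = (\<integral>\<^sup>+ x. ennreal ((qnorm din \<infinity> x + 1) powr P) \<partial>M)"
  have I0fin: "I0 \<noteq> \<infinity>" using Cp False by (auto simp: Cp_def I0_def P_def Let_def)
  define I0r where "I0r = enn2real I0"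
  have I0r0: "0 \<le> I0r" unfolding I0r_def by simp
  have I0eq: "I0 = ennreal I0r" unfolding I0r_def using I0fin by (simp add: less_top)
  have C0: "enn2real (Cp din M p) = I0r powr (1/P)"
    using I0fin False by (simp add: Cp_def I0_def P_def Let_def I0r_def)
  define a where "a = K powr P"
  have a0: "0 \<le> a" unfolding a_def by simp
  note qinf_meas[OF adm, measurable]
  define I where "I = (\<integral>\<^sup>+ x. ennreal (nrm (f x) powr P) \<partial>M)"
  have "I \<le> (\<integral>\<^sup>+ x. ennreal a * ennreal ((qnorm din \<infinity> x + 1) powr P) \<partial>M)"
    unfolding I_def
  proof (rule nn_integral_mono)
    fix x assume x: "x \<in> space M"
    have "nrm (f x) powr P \<le> (K * (qnorm din \<infinity> x + 1)) powr P"
      using nn[OF x] le[OF x] P by (intro powr_mono2) auto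
    also have "\<dots> = a * (qnorm din \<infinity> x + 1) powr P" unfolding a_def by (simp add: powr_mult)
    finally show "ennreal (nrm (f x) powr P) \<le> ennreal a * ennreal ((qnorm din \<infinity> x + 1) powr P)"
      using a0 by (simp add: ennreal_mult'[symmetric] ennreal_leI)
  qed
  also have "\<dots> = ennreal a * I0" unfolding I0_def by (rule nn_integral_cmult) measurable
  also have "\<dots> = ennreal (a * I0r)" using a0 by (simp add: I0eq ennreal_mult')
  finally have II: "I \<le> ennreal (a * I0r)" .
  then have Ifin: "I \<noteq> \<infinity>" by (auto simp: top_unique)
  have "enn2real I \<le> a * I0r"
    using enn2real_mono[OF II] a0 I0r0 by simp
  then have "enn2real I powr (1/P) \<le> (a * I0r) powr (1/P)" using P by (intro powr_mono2) auto
  also have "\<dots> = K * I0r powr (1/P)" using K P unfolding a_def by (simp add: powr_mult powr_powr)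
  also have "\<dots> \<le> K * (I0r powr (1/P) + 1)" using K by (intro mult_left_mono) auto
  finally have "ennreal (enn2real I powr (1/P)) \<le> ennreal (K * (enn2real (Cp din M p) + 1))"
    unfolding C0 by (rule ennreal_leI)
  then show ?thesis using False Ifin by (simp add: lp_norm_def I_def P_def Let_def)
qed


lemma part1:
  fixes din dout :: nat and p q :: ereal
  assumes p: "1 \<le> p" and q: "1 \<le> q"
  shows "\<forall>M nrm. admissible_measure din M \<and> Cp din M p < \<infinity> \<and> is_norm_on dout nrm \<longrightarrow>
      (\<exists>c>0. \<forall>L N. arch L N din dout \<longrightarrow> (\<forall>r\<ge>1. \<forall>\<theta>\<in>param_ball q L N r. \<forall>\<theta>'\<in>param_ball q L N r.
          lp_norm M p nrm (\<lambda>x. realize L N \<theta> x - realize L N \<theta>' x)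
            \<le> ennreal (c * real (width L N) * real L ^ 2 * r ^ (L - 1)
                        * param_sup L N (param_diff \<theta> \<theta>'))))"
proof (intro allI impI)
  fix M :: "vec measure" and nrm :: "vec \<Rightarrow> real"
  assume A: "admissible_measure din M \<and> Cp din M p < \<infinity> \<and> is_norm_on dout nrm"
  then have adm: "admissible_measure din M" and Cp: "Cp din M p < \<infinity>" and nrm: "is_norm_on dout nrm" by auto
  define Cn' where "Cn' = Cn dout nrm"
  have Cn0: "0 \<le> Cn'" unfolding Cn'_def by (rule Cn_nonneg[OF nrm])
  define C0 where "C0 = enn2real (Cp din M p)"
  define c where "c = (Cn' + 1) * (real din + 1) * (C0 + 1)"
  have C00: "0 \<le> C0" unfolding C0_def by simp
  have cpos: "0 < c" unfolding c_def using Cn0 C00 by (intro mult_pos_pos) linarith+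
  show "\<exists>c>0. \<forall>L N. arch L N din dout \<longrightarrow> (\<forall>r\<ge>1. \<forall>\<theta>\<in>param_ball q L N r. \<forall>\<theta>'\<in>param_ball q L N r.
          lp_norm M p nrm (\<lambda>x. realize L N \<theta> x - realize L N \<theta>' x)
            \<le> ennreal (c * real (width L N) * real L ^ 2 * r ^ (L - 1)
                        * param_sup L N (param_diff \<theta> \<theta>')))"
  proof (intro exI[of _ c] conjI cpos allI impI ballI)
    fix L N r \<theta> \<theta>'
    assume ar: "arch L N din dout" and r: "1 \<le> r" and th: "\<theta> \<in> param_ball q L N r" and th': "\<theta>' \<in> param_ball q L N r"
    define B where "B = real (width L N) * real L ^ 2 * r ^ (L - 1) * param_sup L N (param_diff \<theta> \<theta>')"
    have B0: "0 \<le> B" unfolding B_def using ps_nonneg[OF ar] r by simp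
    define K where "K = (Cn' + 1) * (real din + 1) * B"
    have K0: "0 \<le> K" unfolding K_def using Cn0 B0 by simp
    define f where "f = (\<lambda>x. realize L N \<theta> x - realize L N \<theta>' x)"
    have supp: "\<And>x. \<forall>i\<ge>dout. f x i = 0" unfolding f_def using realize_supp[OF ar] by blast
    have "lp_norm M p nrm f \<le> ennreal (K * (enn2real (Cp din M p) + 1))"
    proof (rule lp_general[OF adm p Cp _ _ K0])
      fix x
      show "0 \<le> nrm (f x)" by (rule nrm_nonneg[OF nrm supp])
      have h0: "0 \<le> qnorm din \<infinity> x" by (rule qnorm_nonneg)
      have "nrm (f x) \<le> Cn' * qnorm dout q (f x)" unfolding Cn'_def by (rule nrm_le_qnorm[OF nrm supp q])
      also have "\<dots> \<le> Cn' * (B * (qnorm din q x + 1))"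
        using core[OF ar q r th th', of x] Cn0 unfolding f_def B_def by (intro mult_left_mono) auto
      also have "\<dots> \<le> Cn' * (B * ((real din + 1) * qnorm din \<infinity> x + 1))"
        using qnorm_inf_bound[OF q, of din x] Cn0 B0 by (intro mult_left_mono) auto
      also have "\<dots> \<le> (Cn' + 1) * (B * ((real din + 1) * qnorm din \<infinity> x + (real din + 1)))"
        using Cn0 B0 h0 by (intro mult_mono) auto
      also have "\<dots> = K * (qnorm din \<infinity> x + 1)" unfolding K_def by (simp add: algebra_simps)
      finally show "nrm (f x) \<le> K * (qnorm din \<infinity> x + 1)" .
    next
      have "(\<lambda>x. nrm ((\<lambda>v. \<lambda>i. if i < dout then v i else 0) (f x))) \<in> borel_measurable M"
        by (rule lip_meas[OF nrm_lip[OF nrm]])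
           (simp add: f_def realize_meas[OF adm] ar[unfolded arch_def])
      moreover have "(\<lambda>v. \<lambda>i. if i < dout then v i else 0) (f x) = f x" for x
        using supp[of x] by (auto simp: fun_eq_iff)
      ultimately show "(\<lambda>x. nrm (f x)) \<in> borel_measurable M" by simp
    qed
    also have "K * (enn2real (Cp din M p) + 1) = c * real (width L N) * real L ^ 2 * r ^ (L - 1) * param_sup L N (param_diff \<theta> \<theta>')"
      unfolding K_def c_def B_def C0_def by (simp add: mult_ac)
    finally show "lp_norm M p nrm (\<lambda>x. realize L N \<theta> x - realize L N \<theta>' x)
            \<le> ennreal (c * real (width L N) * real L ^ 2 * r ^ (L - 1) * param_sup L N (param_diff \<theta> \<theta>'))"
      unfolding f_def .
  qed
qed


lemma cube_space_eq: "space (cube_lebesgue d D) = PiE {..<d} (\<lambda>_. {-D..D})"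
  unfolding cube_lebesgue_def by (auto simp: space_restrict_space space_PiM PiE_iff)

lemma cube_adm: "admissible_measure d (cube_lebesgue d D)"
  unfolding admissible_measure_def
proof
  show "space (cube_lebesgue d D) \<subseteq> space (Pi\<^sub>M {..<d} (\<lambda>_. borel))"
    by (auto simp: cube_space_eq space_PiM PiE_iff)
  have "sets (restrict_space (Pi\<^sub>M {..<d} (\<lambda>_. borel)) (space (cube_lebesgue d D)))
      = sets (restrict_space (Pi\<^sub>M {..<d} (\<lambda>_. lborel)) (PiE {..<d} (\<lambda>_. {-D..D})))"
  proof (rule restrict_space_sets_cong)
    show "space (cube_lebesgue d D) = PiE {..<d} (\<lambda>_. {-D..D})" by (rule cube_space_eq)
    show "sets (Pi\<^sub>M {..<d} (\<lambda>_. borel :: real measure)) = sets (Pi\<^sub>M {..<d} (\<lambda>_. lborel))"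
      by (rule sets_PiM_cong) auto
  qed
  then show "sets (restrict_space (Pi\<^sub>M {..<d} (\<lambda>_. borel)) (space (cube_lebesgue d D))) \<subseteq> sets (cube_lebesgue d D)"
    by (simp add: cube_lebesgue_def)
qed

lemma cube_coord: "x \<in> space (cube_lebesgue d D) \<Longrightarrow> i < d \<Longrightarrow> \<bar>x i\<bar> \<le> D"
  using PiE_mem[of x "{..<d}" "\<lambda>_. {-D..D}" i] by (auto simp: cube_space_eq abs_le_iff)

lemma cube_measure:
  assumes D: "0 < D"
  shows "emeasure (cube_lebesgue d D) (space (cube_lebesgue d D)) = ennreal ((2*D)^d)"
proof -
  interpret product_sigma_finite "\<lambda>_::nat. lborel"
    by (simp add: product_sigma_finite_def lborel.sigma_finite_measure_axioms)
  have S: "PiE {..<d} (\<lambda>_. {-D..D}) \<in> sets (Pi\<^sub>M {..<d} (\<lambda>_. lborel))"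
    by (intro sets_PiM_I_finite) auto
  have "emeasure (cube_lebesgue d D) (space (cube_lebesgue d D))
      = emeasure (Pi\<^sub>M {..<d} (\<lambda>_. lborel)) (PiE {..<d} (\<lambda>_. {-D..D}))"
    unfolding cube_space_eq unfolding cube_lebesgue_def
    by (rule emeasure_restrict_space) (use S sets.sets_into_space[OF S] in \<open>auto simp: Int_absorb2\<close>)
  also have "\<dots> = (\<Prod>i<d. emeasure lborel {-D..D})" by (rule emeasure_PiM) auto
  also have "\<dots> = ennreal ((2*D)^d)" using D by (simp add: ennreal_power)
  finally show ?thesis .
qed


lemma cube_meas:
  assumes ar: "arch L N din dout" and q: "1 \<le> q"
  shows "(\<lambda>x. qnorm dout q (realize L N \<theta> x - realize L N \<theta>' x)) \<in> borel_measurable (cube_lebesgue din D)"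
  by (rule lip_meas[OF qnorm_lip[OF q]])
     (simp add: realize_meas[OF cube_adm] ar[unfolded arch_def])

lemma part2:
  fixes din dout :: nat and p q :: ereal
  assumes q: "1 \<le> q"
  shows "\<forall>D>0. p = \<infinity> \<longrightarrow>
      (\<forall>L N. arch L N din dout \<longrightarrow> (\<forall>r\<ge>1. \<forall>\<theta>\<in>param_ball q L N r. \<forall>\<theta>'\<in>param_ball q L N r.
          lp_norm (cube_lebesgue din D) p (qnorm dout q) (\<lambda>x. realize L N \<theta> x - realize L N \<theta>' x)
            \<le> ennreal ((D * real din powr inv_exp q + 1) * real (width L N) * real L ^ 2 * r ^ (L - 1)
                        * param_sup L N (param_diff \<theta> \<theta>'))))"
proof (intro allI impI ballI)
  fix D :: real and L N r \<theta> \<theta>'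
  assume D: "0 < D" and p: "p = \<infinity>" and ar: "arch L N din dout" and r: "1 \<le> r"
    and th: "\<theta> \<in> param_ball q L N r" and th': "\<theta>' \<in> param_ball q L N r"
  define B where "B = real (width L N) * real L ^ 2 * r ^ (L - 1) * param_sup L N (param_diff \<theta> \<theta>')"
  have B0: "0 \<le> B" unfolding B_def using ps_nonneg[OF ar] r by simp
  note cube_meas[OF ar q, of \<theta> \<theta>' D, measurable]
  have "esssup (cube_lebesgue din D) (\<lambda>x. ennreal (qnorm dout q (realize L N \<theta> x - realize L N \<theta>' x)))
      \<le> ennreal (B * (D * real din powr inv_exp q + 1))"
  proof (rule esssup_I)
    show "(\<lambda>x. ennreal (qnorm dout q (realize L N \<theta> x - realize L N \<theta>' x))) \<in> borel_measurable (cube_lebesgue din D)"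
      by measurable
    show "AE x in cube_lebesgue din D. ennreal (qnorm dout q (realize L N \<theta> x - realize L N \<theta>' x)) \<le> ennreal (B * (D * real din powr inv_exp q + 1))"
    proof (rule AE_I2, rule ennreal_leI)
      fix x assume x: "x \<in> space (cube_lebesgue din D)"
      have "qnorm din q x \<le> real din powr inv_exp q * D"
        by (rule qnorm_bound[OF q]) (use D cube_coord[OF x] in auto)
      then have "qnorm din q x + 1 \<le> D * real din powr inv_exp q + 1" by (simp add: mult_ac)
      then have "B * (qnorm din q x + 1) \<le> B * (D * real din powr inv_exp q + 1)"
        using B0 by (intro mult_left_mono) auto
      moreover have "qnorm dout q (realize L N \<theta> x - realize L N \<theta>' x) \<le> B * (qnorm din q x + 1)"
        using core[OF ar q r th th', of x] unfolding B_def by simp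
      ultimately show "qnorm dout q (realize L N \<theta> x - realize L N \<theta>' x) \<le> B * (D * real din powr inv_exp q + 1)"
        by linarith
    qed
  qed
  then show "lp_norm (cube_lebesgue din D) p (qnorm dout q) (\<lambda>x. realize L N \<theta> x - realize L N \<theta>' x)
            \<le> ennreal ((D * real din powr inv_exp q + 1) * real (width L N) * real L ^ 2 * r ^ (L - 1)
                        * param_sup L N (param_diff \<theta> \<theta>'))"
    using p unfolding lp_norm_def B_def by (simp add: mult_ac)
qed

lemma part3:
  fixes din dout :: nat and p q :: ereal
  assumes p: "1 \<le> p"
  shows "\<forall>D>0. q = \<infinity> \<longrightarrow>
      (\<forall>L N. arch L N din dout \<longrightarrow> (\<forall>r\<ge>1. \<forall>\<theta>\<in>param_ball q L N r. \<forall>\<theta>'\<in>param_ball q L N r.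
          lp_norm (cube_lebesgue din D) p (qnorm dout \<infinity>) (\<lambda>x. realize L N \<theta> x - realize L N \<theta>' x)
            \<le> ennreal ((D + 1) * (2 * D) powr (real din * inv_exp p) * real (width L N) * real L ^ 2
                        * r ^ (L - 1) * param_sup L N (param_diff \<theta> \<theta>'))))"
proof (intro allI impI ballI)
  fix D :: real and L N r \<theta> \<theta>'
  assume D: "0 < D" and qi: "q = \<infinity>" and ar: "arch L N din dout" and r: "1 \<le> r"
    and th: "\<theta> \<in> param_ball q L N r" and th': "\<theta>' \<in> param_ball q L N r"
  have q: "1 \<le> (\<infinity>::ereal)" by simp
  have th: "\<theta> \<in> param_ball \<infinity> L N r" and th': "\<theta>' \<in> param_ball \<infinity> L N r" using th th' qi by auto
  define B where "B = real (width L N) * real L ^ 2 * r ^ (L - 1) * param_sup L N (param_diff \<theta> \<theta>')"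
  have B0: "0 \<le> B" unfolding B_def using ps_nonneg[OF ar] r by simp
  define g where "g = (\<lambda>x. qnorm dout \<infinity> (realize L N \<theta> x - realize L N \<theta>' x))"
  have g0: "0 \<le> g x" for x unfolding g_def by (rule qnorm_nonneg)
  have gle: "g x \<le> B * (D + 1)" if x: "x \<in> space (cube_lebesgue din D)" for x
  proof -
    have "qnorm din \<infinity> x \<le> real din powr inv_exp \<infinity> * D"
      by (rule qnorm_bound[OF q]) (use D cube_coord[OF x] in auto)
    also have "\<dots> \<le> D" using D by (simp add: inv_exp_def)
    finally have "B * (qnorm din \<infinity> x + 1) \<le> B * (D + 1)"
      using B0 by (intro mult_left_mono) auto
    moreover have "g x \<le> B * (qnorm din \<infinity> x + 1)"
      using core[OF ar q r th th', of x] unfolding B_def g_def by simp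
    ultimately show ?thesis by linarith
  qed
  have BD0: "0 \<le> B * (D + 1)" using B0 D by simp
  have "lp_norm (cube_lebesgue din D) p (qnorm dout \<infinity>) (\<lambda>x. realize L N \<theta> x - realize L N \<theta>' x)
      \<le> ennreal (B * (D + 1) * (2 * D) powr (real din * inv_exp p))"
  proof (cases "p = \<infinity>")
    case True
    note cube_meas[OF ar q, of \<theta> \<theta>' D, measurable]
    have "esssup (cube_lebesgue din D) (\<lambda>x. ennreal (g x)) \<le> ennreal (B * (D + 1))"
      unfolding g_def by (rule esssup_I) (measurable, use gle in \<open>auto simp: g_def intro!: AE_I2 ennreal_leI\<close>)
    then show ?thesis using True D by (simp add: lp_norm_def g_def inv_exp_def)
  next
    case False
    define P where "P = real_of_ereal p"
    have P: "1 \<le> P" using Q_ge1[OF p False] P_def by simp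
    define a where "a = (B * (D + 1)) powr P"
    have a0: "0 \<le> a" unfolding a_def by simp
    define I where "I = (\<integral>\<^sup>+ x. ennreal (g x powr P) \<partial>cube_lebesgue din D)"
    have "I \<le> (\<integral>\<^sup>+ x. ennreal a \<partial>cube_lebesgue din D)"
      unfolding I_def
    proof (rule nn_integral_mono)
      fix x assume x: "x \<in> space (cube_lebesgue din D)"
      show "ennreal (g x powr P) \<le> ennreal a"
        unfolding a_def using gle[OF x] g0[of x] P by (intro ennreal_leI powr_mono2) auto
    qed
    also have "\<dots> = ennreal (a * (2*D)^din)"
      using a0 D by (simp add: cube_measure ennreal_mult')
    finally have II: "I \<le> ennreal (a * (2*D)^din)" .
    then have Ifin: "I \<noteq> \<infinity>" by (auto simp: top_unique)
    have "enn2real I \<le> a * (2*D)^din" using enn2real_mono[OF II] a0 D by simp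
    then have "enn2real I powr (1/P) \<le> (a * (2*D)^din) powr (1/P)" using P by (intro powr_mono2) auto
    also have "\<dots> = B * (D + 1) * (2 * D) powr (real din * inv_exp p)"
    proof -
      have "(2*D)^din = (2*D) powr real din" using D by (simp add: powr_realpow)
      then show ?thesis using P BD0 B0 D False unfolding a_def
        by (simp add: powr_mult powr_powr inv_exp_def P_def mult_ac)
    qed
    finally have "ennreal (enn2real I powr (1/P)) \<le> ennreal (B * (D + 1) * (2 * D) powr (real din * inv_exp p))"
      by (rule ennreal_leI)
    then show ?thesis using False Ifin by (simp add: lp_norm_def I_def P_def Let_def g_def)
  qed
  then show "lp_norm (cube_lebesgue din D) p (qnorm dout \<infinity>) (\<lambda>x. realize L N \<theta> x - realize L N \<theta>' x)
            \<le> ennreal ((D + 1) * (2 * D) powr (real din * inv_exp p) * real (width L N) * real L ^ 2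
                        * r ^ (L - 1) * param_sup L N (param_diff \<theta> \<theta>'))"
    unfolding B_def by (simp add: mult_ac)
qed


lemma pow_diff_ge:
  assumes "0 \<le> s" "s \<le> (r::real)"
  shows "real n * s ^ (n - 1) * (r - s) \<le> r ^ n - s ^ n"
proof -
  have "(\<Sum>i<n. s ^ (n - 1)) \<le> (\<Sum>i<n. s ^ (n - Suc i) * r ^ i)"
  proof (intro sum_mono)
    fix i assume i: "i \<in> {..<n}"
    have "s ^ (n - 1) = s ^ (n - Suc i) * s ^ i" using i by (simp add: power_add[symmetric])
    also have "\<dots> \<le> s ^ (n - Suc i) * r ^ i" using assms by (intro mult_left_mono power_mono) auto
    finally show "s ^ (n - 1) \<le> s ^ (n - Suc i) * r ^ i" .
  qed
  then have "(r - s) * (\<Sum>i<n. s ^ (n - 1)) \<le> (r - s) * (\<Sum>i<n. s ^ (n - Suc i) * r ^ i)"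
    using assms by (intro mult_left_mono) auto
  then show ?thesis by (simp add: power_diff_sumr2 mult_ac)
qed

lemma key_arith:
  assumes r: "1 \<le> r" and L: "1 \<le> L"
  defines "\<delta> \<equiv> r / (2 * real L)"
  shows "real L * r ^ (L - 1) * \<delta> / 2 \<le> r ^ L - (r - \<delta>) ^ L" and "0 < \<delta>" and "\<delta> \<le> r / 2"
proof -
  have Lp: "0 < real L" using L by simp
  show d0: "0 < \<delta>" unfolding \<delta>_def using r Lp by simp
  show dr: "\<delta> \<le> r / 2" unfolding \<delta>_def using r L by (simp add: field_simps)
  have s0: "0 \<le> r - \<delta>" using dr r by simp
  have "1 + real (L - 1) * (- (1 / (2 * real L))) \<le> (1 + - (1 / (2 * real L))) ^ (L - 1)"
    by (rule Bernoulli_inequality) (use Lp in \<open>simp add: field_simps\<close>)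
  moreover have "1 / 2 \<le> 1 + real (L - 1) * (- (1 / (2 * real L)))"
    using L Lp by (simp add: of_nat_diff field_simps)
  ultimately have B: "1 / 2 \<le> (1 - 1 / (2 * real L)) ^ (L - 1)" by simp
  have "r - \<delta> = r * (1 - 1 / (2 * real L))" unfolding \<delta>_def by (simp add: field_simps)
  then have "(r - \<delta>) ^ (L - 1) = r ^ (L - 1) * (1 - 1 / (2 * real L)) ^ (L - 1)" by (simp add: power_mult_distrib)
  then have sp: "r ^ (L - 1) / 2 \<le> (r - \<delta>) ^ (L - 1)"
    using B r by (simp add: mult_left_mono[of "1/2" _ "r ^ (L-1)", simplified])
  have "real L * r ^ (L - 1) * \<delta> / 2 = real L * (r ^ (L - 1) / 2) * (r - (r - \<delta>))" by simp
  also have "\<dots> \<le> real L * (r - \<delta>) ^ (L - 1) * (r - (r - \<delta>))"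
    using sp d0 by (intro mult_right_mono mult_left_mono) auto
  also have "\<dots> \<le> r ^ L - (r - \<delta>) ^ L" by (rule pow_diff_ge) (use s0 d0 in auto)
  finally show "real L * r ^ (L - 1) * \<delta> / 2 \<le> r ^ L - (r - \<delta>) ^ L" .
qed

lemma qnorm_single:
  assumes q: "1 \<le> q" and m: "1 \<le> m"
  shows "qnorm m q (\<lambda>i. if i = 0 then c else 0) = \<bar>c\<bar>"
proof (rule antisym)
  show "\<bar>c\<bar> \<le> qnorm m q (\<lambda>i. if i = 0 then c else 0)"
    using qnorm_ge[OF q, of 0 m "\<lambda>i. if i = 0 then c else 0"] m by simp
  show "qnorm m q (\<lambda>i. if i = 0 then c else 0) \<le> \<bar>c\<bar>"
  proof (cases "q = \<infinity>")
    case True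
    show ?thesis unfolding True qnorm_inf by (rule Max.boundedI) auto
  next
    case False
    define Q where "Q = real_of_ereal q"
    have Q: "1 \<le> Q" using Q_ge1[OF q False] Q_def by simp
    have "(\<Sum>i<m. \<bar>if i = 0 then c else 0\<bar> powr Q) = (\<Sum>i<m. if i = 0 then \<bar>c\<bar> powr Q else 0)"
      using Q by (intro sum.cong) auto
    also have "\<dots> = \<bar>c\<bar> powr Q" using m by (simp add: sum.delta)
    finally show ?thesis using Q by (simp add: qnorm_fin[OF False] Q_def[symmetric] powr_powr)
  qed
qed


definition Wt :: "nat \<Rightarrow> real \<Rightarrow> nat \<Rightarrow> nat \<Rightarrow> nat \<Rightarrow> real" where
  "Wt L a = (\<lambda>l i j. if 1 \<le> l \<and> l \<le> L \<and> i = 0 \<and> j = 0 then a else 0)"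

definition th_of :: "nat \<Rightarrow> real \<Rightarrow> params" where "th_of L a = (Wt L a, \<lambda>l i. 0)"

lemma arch_N: "arch L N din dout \<Longrightarrow> l \<le> L \<Longrightarrow> 1 \<le> N l"
  by (auto simp: arch_def)

lemma matvec_e0:
  assumes "1 \<le> n"
  shows "matvec m n (\<lambda>i j. if i = 0 \<and> j = 0 then a else 0) x = (\<lambda>i. if i = 0 \<and> 0 < m then a * x 0 else 0)"
  using assms by (auto simp: matvec_def fun_eq_iff if_distrib[of "\<lambda>t. t * _"] sum.delta cong: if_cong)

lemma opnorm_e0:
  assumes q: "1 \<le> q" and m: "1 \<le> m" and n: "1 \<le> n" and a: "0 \<le> a" "a \<le> r"
  shows "opnorm q m n (\<lambda>i j. if i = 0 \<and> j = 0 then a else 0) \<le> r"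
  unfolding opnorm_def
proof (rule cSup_least)
  show "{qnorm m q (matvec m n (\<lambda>i j. if i = 0 \<and> j = 0 then a else 0) x) / qnorm n q x |x.
          (\<forall>i\<ge>n. x i = 0) \<and> x \<noteq> (\<lambda>_. 0)} \<noteq> {}"
    using n by (auto intro!: exI[of _ "ev 0"] simp: ev_def fun_eq_iff)
  fix t assume "t \<in> {qnorm m q (matvec m n (\<lambda>i j. if i = 0 \<and> j = 0 then a else 0) x) / qnorm n q x |x.
          (\<forall>i\<ge>n. x i = 0) \<and> x \<noteq> (\<lambda>_. 0)}"
  then obtain x where t: "t = qnorm m q (matvec m n (\<lambda>i j. if i = 0 \<and> j = 0 then a else 0) x) / qnorm n q x"
    and x: "\<forall>i\<ge>n. x i = 0" "x \<noteq> (\<lambda>_. 0)" by auto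
  obtain i where i: "x i \<noteq> 0" using x(2) by auto
  then have "i < n" using x(1) by (meson not_less)
  then have xp: "0 < qnorm n q x" using qnorm_pos[OF q, of i n x] i by simp
  have "qnorm m q (matvec m n (\<lambda>i j. if i = 0 \<and> j = 0 then a else 0) x) = qnorm m q (\<lambda>i. if i = 0 then a * x 0 else 0)"
    unfolding matvec_e0[OF n] using m by (intro qnorm_cong) auto
  also have "\<dots> = a * \<bar>x 0\<bar>" using qnorm_single[OF q m] a by (simp add: abs_mult)
  also have "\<dots> \<le> a * qnorm n q x" using a n by (intro mult_left_mono qnorm_ge[OF q]) auto
  also have "\<dots> \<le> r * qnorm n q x" using a xp by (intro mult_right_mono) auto
  finally show "t \<le> r" using t xp by (simp add: divide_le_eq)
qed

lemma th_in_ball: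
  assumes ar: "arch L N din dout" and q: "1 \<le> q" and a: "0 \<le> a" "a \<le> r"
  shows "th_of L a \<in> param_ball q L N r"
  unfolding param_ball_def
proof (intro CollectI conjI allI impI)
  show "th_of L a \<in> param_space L N"
    using arch_N[OF ar] unfolding param_space_def th_of_def Wt_def
    by (auto simp: Suc_le_eq)
  fix l assume l: "1 \<le> l \<and> l \<le> L"
  have "fst (th_of L a) l = (\<lambda>i j. if i = 0 \<and> j = 0 then a else 0)"
    using l by (auto simp: th_of_def Wt_def fun_eq_iff)
  then show "opnorm q (N l) (N (l - 1)) (fst (th_of L a) l) \<le> r"
    using opnorm_e0[OF q arch_N[OF ar] arch_N[OF ar] a, of l "l - 1"] l by (simp add: le_diff_conv)
  have "qnorm (N l) q (snd (th_of L a) l) = 0" using q by (intro qnorm_zero_vec) (auto simp: th_of_def)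
  then show "qnorm (N l) q (snd (th_of L a) l) \<le> r" using a by simp
qed

lemma hidden_th:
  assumes ar: "arch L N din dout" and a: "0 \<le> a" and x0: "0 \<le> x 0"
  shows "l < L \<Longrightarrow> hidden N (th_of L a) x l 0 = a ^ l * x 0"
proof (induction l)
  case 0 then show ?case using arch_N[OF ar, of 0] by simp
next
  case (Suc l)
  have "affine N (th_of L a) (Suc l) (hidden N (th_of L a) x l) 0 = a * hidden N (th_of L a) x l 0"
    using arch_N[OF ar, of "Suc l"] arch_N[OF ar, of l] Suc.prems
    by (simp add: affine_def th_of_def Wt_def if_distrib[of "\<lambda>t. t * _"] sum.delta cong: if_cong)
  then show ?case using Suc a x0 by simp
qed

lemma realize_th:
  assumes ar: "arch L N din dout" and a: "0 \<le> a" and x0: "0 \<le> x 0"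
  shows "realize L N (th_of L a) x = (\<lambda>i. if i = 0 then a ^ L * x 0 else 0)"
proof -
  have L: "1 \<le> L" using ar by (simp add: arch_def)
  have h: "hidden N (th_of L a) x (L - 1) 0 = a ^ (L - 1) * x 0" using hidden_th[where x=x and N=N and L=L, OF ar a x0, of "L - 1"] L by simp
  have "a * a ^ (L - 1) = a ^ L" using L by (simp add: power_eq_if)
  then show ?thesis
    using arch_N[OF ar, of L] arch_N[OF ar, of "L - 1"] h L
    by (auto simp: realize_def affine_def th_of_def Wt_def fun_eq_iff if_distrib[of "\<lambda>t. t * _"] sum.delta cong: if_cong)
qed

lemma ps_th:
  assumes ar: "arch L N din dout" and s: "s \<le> r"
  shows "param_sup L N (param_diff (th_of L r) (th_of L s)) = r - s"
proof (rule antisym)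
  have L: "1 \<le> L" using ar by (simp add: arch_def)
  show "r - s \<le> param_sup L N (param_diff (th_of L r) (th_of L s))"
    using ps_W[of 1 L 0 N 0 "th_of L r" "th_of L s"] L arch_N[OF ar, of 1] arch_N[OF ar, of 0] s
    by (simp add: th_of_def Wt_def)
  show "param_sup L N (param_diff (th_of L r) (th_of L s)) \<le> r - s"
    unfolding param_sup_def
  proof (rule Max.boundedI)
    show "finite ({\<bar>fst (param_diff (th_of L r) (th_of L s)) l i j\<bar> |l i j. 1 \<le> l \<and> l \<le> L \<and> i < N l \<and> j < N (l - 1)} \<union>
       {\<bar>snd (param_diff (th_of L r) (th_of L s)) l i\<bar> |l i. 1 \<le> l \<and> l \<le> L \<and> i < N l})"
      by (intro finite_UnI finite_S1 finite_S2)
    show "{\<bar>fst (param_diff (th_of L r) (th_of L s)) l i j\<bar> |l i j. 1 \<le> l \<and> l \<le> L \<and> i < N l \<and> j < N (l - 1)} \<union>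
       {\<bar>snd (param_diff (th_of L r) (th_of L s)) l i\<bar> |l i. 1 \<le> l \<and> l \<le> L \<and> i < N l} \<noteq> {}"
    proof -
      have "\<bar>fst (param_diff (th_of L r) (th_of L s)) 1 0 0\<bar> \<in> {\<bar>fst (param_diff (th_of L r) (th_of L s)) l i j\<bar> |l i j. 1 \<le> l \<and> l \<le> L \<and> i < N l \<and> j < N (l - 1)}"
        using L arch_N[OF ar, of 1] arch_N[OF ar, of 0] by force
      then show ?thesis by blast
    qed
  qed (use s in \<open>auto simp: param_diff_def th_of_def Wt_def\<close>)
qed


lemma lower_V:
  fixes M :: "vec measure" and p :: ereal
  assumes adm: "admissible_measure din M" and p: "1 \<le> p" and Cp: "Cp din M p < \<infinity>"
    and din: "0 < din" and pos: "emeasure M {x \<in> space M. x 0 \<noteq> 0} > 0"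
  shows "\<exists>V>0. \<forall>(F::vec \<Rightarrow> real) (f::vec \<Rightarrow> vec) a. 0 < a \<longrightarrow> (\<forall>x\<in>space M. F (f x) = a * \<bar>x 0\<bar>) \<longrightarrow>
           ennreal (a * V) \<le> lp_norm M p F f"
proof -
  note c0[measurable] = coord_meas[OF adm din]
  have Nset: "{x \<in> space M. x 0 \<noteq> 0} \<in> sets M" by measurable
  have notAE: "\<not> (AE x in M. x 0 = 0)"
    using AE_iff_measurable[OF Nset, of "\<lambda>x. x 0 = 0"] pos by auto
  show ?thesis
  proof (cases "p = \<infinity>")
    case True
    define E where "E = esssup M (\<lambda>x. ennreal \<bar>x 0\<bar>)"
    have "E \<le> Cp din M p" unfolding E_def Cp_def using True
      by (simp, intro esssup_mono ennreal_leI) (measurable, use qnorm_ge[of \<infinity> 0 din] din in auto)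
    then have Efin: "E < \<infinity>" using Cp by simp
    have E0: "E \<noteq> 0"
    proof
      assume "E = 0"
      then have "AE x in M. ennreal \<bar>x 0\<bar> \<le> 0" using esssup_AE[of "\<lambda>x. ennreal \<bar>x 0\<bar>" M] E_def by simp
      then have "AE x in M. x 0 = 0" by (rule AE_mp) (auto intro!: AE_I2)
      then show False using notAE by simp
    qed
    define V where "V = enn2real E"
    have EV: "E = ennreal V" unfolding V_def using Efin by simp
    have V0: "0 < V" using E0 EV by (cases "V > 0") (auto simp: not_less ennreal_eq_0_iff)
    show ?thesis
    proof (intro exI[of _ V] conjI V0 allI impI)
      fix F :: "vec \<Rightarrow> real" and f :: "vec \<Rightarrow> vec" and a :: real
      assume a: "0 < a" and Ff: "\<forall>x\<in>space M. F (f x) = a * \<bar>x 0\<bar>"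
      define E2 where "E2 = esssup M (\<lambda>x. ennreal (F (f x)))"
      have "AE x in M. ennreal (F (f x)) \<le> E2" unfolding E2_def by (rule esssup_AE)
      then have "AE x in M. ennreal \<bar>x 0\<bar> \<le> ennreal (1/a) * E2"
      proof (rule AE_mp, intro AE_I2 impI)
        fix x assume x: "x \<in> space M" and le: "ennreal (F (f x)) \<le> E2"
        have "ennreal \<bar>x 0\<bar> = ennreal (1/a) * ennreal (F (f x))"
          using Ff x a by (simp add: ennreal_mult'[symmetric])
        also have "\<dots> \<le> ennreal (1/a) * E2" using le by (rule mult_left_mono) simp
        finally show "ennreal \<bar>x 0\<bar> \<le> ennreal (1/a) * E2" .
      qed
      then have "E \<le> ennreal (1/a) * E2" unfolding E_def by (intro esssup_I) measurable
      then have "ennreal a * E \<le> ennreal a * (ennreal (1/a) * E2)" by (rule mult_left_mono) simp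
      also have "\<dots> = E2" using a by (simp add: ennreal_mult'[symmetric] mult.assoc[symmetric])
      finally have "ennreal a * E \<le> E2" .
      then show "ennreal (a * V) \<le> lp_norm M p F f"
        using True a unfolding EV E2_def lp_norm_def by (simp add: ennreal_mult')
    qed
  next
    case False
    define P where "P = real_of_ereal p"
    have P: "1 \<le> P" using Q_ge1[OF p False] P_def by simp
    define I0 where "I0 = (\<integral>\<^sup>+ x. ennreal (\<bar>x 0\<bar> powr P) \<partial>M)"
    define J0 where "J0 = (\<integral>\<^sup>+ x. ennreal ((qnorm din \<infinity> x + 1) powr P) \<partial>M)"
    have J0fin: "J0 \<noteq> \<infinity>" using Cp False by (auto simp: Cp_def J0_def P_def Let_def)
    have "I0 \<le> J0" unfolding I0_def J0_def
    proof (rule nn_integral_mono)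
      fix x
      have "\<bar>x 0\<bar> \<le> qnorm din \<infinity> x" by (rule qnorm_ge) (use din in auto)
      then show "ennreal (\<bar>x 0\<bar> powr P) \<le> ennreal ((qnorm din \<infinity> x + 1) powr P)"
        using P by (intro ennreal_leI powr_mono2) auto
    qed
    then have I0fin: "I0 < \<infinity>" using J0fin by (simp add: less_top[symmetric] top_unique) (metis less_top top_unique)
    have I00: "I0 \<noteq> 0"
    proof
      assume "I0 = 0"
      then have "AE x in M. ennreal (\<bar>x 0\<bar> powr P) = 0"
        unfolding I0_def by (subst (asm) nn_integral_0_iff_AE) (measurable)
      then have "AE x in M. x 0 = 0" by (rule AE_mp) (auto intro!: AE_I2)
      then show False using notAE by simp
    qed
    define I0r where "I0r = enn2real I0"
    have I0eq: "I0 = ennreal I0r" unfolding I0r_def using I0fin by simp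
    have I0r: "0 < I0r" using I00 I0eq by (cases "I0r > 0") (auto simp: not_less ennreal_eq_0_iff)
    define V where "V = I0r powr (1/P)"
    have V0: "0 < V" unfolding V_def using I0r by simp
    show ?thesis
    proof (intro exI[of _ V] conjI V0 allI impI)
      fix F :: "vec \<Rightarrow> real" and f :: "vec \<Rightarrow> vec" and a :: real
      assume a: "0 < a" and Ff: "\<forall>x\<in>space M. F (f x) = a * \<bar>x 0\<bar>"
      define I where "I = (\<integral>\<^sup>+ x. ennreal (F (f x) powr P) \<partial>M)"
      have "I = (\<integral>\<^sup>+ x. ennreal (a powr P) * ennreal (\<bar>x 0\<bar> powr P) \<partial>M)"
        unfolding I_def using Ff a by (intro nn_integral_cong) (simp add: powr_mult ennreal_mult')
      also have "\<dots> = ennreal (a powr P) * I0" unfolding I0_def by (rule nn_integral_cmult) measurable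
      also have "\<dots> = ennreal (a powr P * I0r)" unfolding I0eq by (simp add: ennreal_mult')
      finally have II: "I = ennreal (a powr P * I0r)" .
      have "enn2real I powr (1/P) = (a powr P * I0r) powr (1/P)" using II I0r by simp
      also have "\<dots> = a * V" unfolding V_def using a P I0r by (simp add: powr_mult powr_powr)
      finally show "ennreal (a * V) \<le> lp_norm M p F f"
        using False II unfolding lp_norm_def by (simp add: I_def P_def Let_def)
    qed
  qed
qed


lemma part4:
  fixes din dout :: nat and p q :: ereal
  assumes p: "1 \<le> p" and q: "1 \<le> q"
  shows "\<forall>M. admissible_measure din M \<and> Cp din M p < \<infinity> \<and>
          (\<forall>x\<in>space M. \<forall>i<din. 0 \<le> x i) \<and>
          emeasure M {x \<in> space M. x 0 \<noteq> 0} > 0 \<longrightarrow>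
      (\<exists>c'>0. \<forall>L N. arch L N din dout \<and> (p \<noteq> \<infinity> \<longrightarrow> (\<forall>l\<le>L. N 0 \<le> N l)) \<longrightarrow>
         (\<forall>r\<ge>1. \<forall>\<epsilon>>0. \<exists>\<theta>\<in>param_ball q L N r. \<exists>\<theta>'\<in>param_ball q L N r. \<theta> \<noteq> \<theta>' \<and>
            lp_norm M p (qnorm dout q) (\<lambda>x. realize L N \<theta> x - realize L N \<theta>' x)
              \<ge> ennreal ((1 - \<epsilon>) * c' * real L * r ^ (L - 1)
                          * param_sup L N (param_diff \<theta> \<theta>'))))"
proof (intro allI impI)
  fix M :: "vec measure"
  assume A: "admissible_measure din M \<and> Cp din M p < \<infinity> \<and> (\<forall>x\<in>space M. \<forall>i<din. 0 \<le> x i) \<and>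
          emeasure M {x \<in> space M. x 0 \<noteq> 0} > 0"
  then have adm: "admissible_measure din M" and Cp: "Cp din M p < \<infinity>"
    and nonneg: "\<forall>x\<in>space M. \<forall>i<din. 0 \<le> x i" and pos: "emeasure M {x \<in> space M. x 0 \<noteq> 0} > 0" by auto
  show "\<exists>c'>0. \<forall>L N. arch L N din dout \<and> (p \<noteq> \<infinity> \<longrightarrow> (\<forall>l\<le>L. N 0 \<le> N l)) \<longrightarrow>
         (\<forall>r\<ge>1. \<forall>\<epsilon>>0. \<exists>\<theta>\<in>param_ball q L N r. \<exists>\<theta>'\<in>param_ball q L N r. \<theta> \<noteq> \<theta>' \<and>
            lp_norm M p (qnorm dout q) (\<lambda>x. realize L N \<theta> x - realize L N \<theta>' x)
              \<ge> ennreal ((1 - \<epsilon>) * c' * real L * r ^ (L - 1)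
                          * param_sup L N (param_diff \<theta> \<theta>')))"
  proof (cases "din = 0")
    case True
    show ?thesis by (rule exI[of _ 1]) (use True in \<open>auto simp: arch_def\<close>)
  next
    case False
    then have din: "0 < din" by simp
    obtain V where V0: "0 < V" and V: "\<And>(F::vec \<Rightarrow> real) (f::vec \<Rightarrow> vec) a. 0 < a \<Longrightarrow> (\<forall>x\<in>space M. F (f x) = a * \<bar>x 0\<bar>) \<Longrightarrow>
           ennreal (a * V) \<le> lp_norm M p F f"
      using lower_V[OF adm p Cp din pos] by blast
    show ?thesis
    proof (intro exI[of _ "V/2"] conjI allI impI ballI)
      show "0 < V / 2" using V0 by simp
      fix L :: nat and N :: "nat \<Rightarrow> nat" and r \<epsilon> :: real
      assume LN: "arch L N din dout \<and> (p \<noteq> \<infinity> \<longrightarrow> (\<forall>l\<le>L. N 0 \<le> N l))" and r: "1 \<le> r" and eps: "0 < \<epsilon>"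
      then have ar: "arch L N din dout" by simp
      have L: "1 \<le> L" using ar by (simp add: arch_def)
      define \<delta> where "\<delta> = r / (2 * real L)"
      note ka = key_arith[OF r L, folded \<delta>_def]
      define s where "s = r - \<delta>"
      have s: "0 \<le> s" "s \<le> r" unfolding s_def using ka r by auto
      define a where "a = r ^ L - s ^ L"
      have a_ge: "real L * r ^ (L - 1) * \<delta> / 2 \<le> a" unfolding a_def s_def using ka by simp
      have "0 < real L * r ^ (L - 1) * \<delta> / 2" using L ka(2) r by simp
      then have apos: "0 < a" using a_ge by linarith
      have thb: "th_of L r \<in> param_ball q L N r" by (rule th_in_ball[OF ar q]) (use r in auto)
      have thb': "th_of L s \<in> param_ball q L N r" by (rule th_in_ball[OF ar q s])
      have neq: "th_of L r \<noteq> th_of L s"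
      proof
        assume "th_of L r = th_of L s"
        then have "fst (th_of L r) 1 0 0 = fst (th_of L s) 1 0 0" by simp
        then show False using L ka(2) by (simp add: th_of_def Wt_def s_def)
      qed
      have FF: "\<forall>x\<in>space M. qnorm dout q ((\<lambda>x. realize L N (th_of L r) x - realize L N (th_of L s) x) x) = a * \<bar>x 0\<bar>"
      proof
        fix x assume x: "x \<in> space M"
        have x0: "0 \<le> x 0" using nonneg x din by auto
        have "(realize L N (th_of L r) x - realize L N (th_of L s) x) = (\<lambda>i. if i = 0 then a * x 0 else 0)"
          using realize_th[where x=x and a=r, OF ar _ x0] realize_th[where x=x and a=s, OF ar s(1) x0] r
          by (auto simp: fun_eq_iff a_def algebra_simps)
        moreover have "1 \<le> dout" using arch_N[OF ar, of L] ar by (simp add: arch_def)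
        ultimately show "qnorm dout q ((\<lambda>x. realize L N (th_of L r) x - realize L N (th_of L s) x) x) = a * \<bar>x 0\<bar>"
          using qnorm_single[OF q, of dout "a * x 0"] apos by (simp add: abs_mult)
      qed
      have low: "ennreal (a * V) \<le> lp_norm M p (qnorm dout q) (\<lambda>x. realize L N (th_of L r) x - realize L N (th_of L s) x)"
        by (rule V[where F="qnorm dout q" and f="\<lambda>x. realize L N (th_of L r) x - realize L N (th_of L s) x", OF apos FF])
      have ps: "param_sup L N (param_diff (th_of L r) (th_of L s)) = \<delta>"
        using ps_th[OF ar s(2)] by (simp add: s_def)
      have X0: "0 \<le> V / 2 * real L * r ^ (L - 1) * \<delta>" using V0 ka(2) r by simp
      have "(1 - \<epsilon>) * (V / 2) * real L * r ^ (L - 1) * \<delta> = (1 - \<epsilon>) * (V / 2 * real L * r ^ (L - 1) * \<delta>)"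
        by (simp add: mult_ac)
      also have "\<dots> \<le> V / 2 * real L * r ^ (L - 1) * \<delta>"
      proof -
        have "0 \<le> \<epsilon> * (V / 2 * real L * r ^ (L - 1) * \<delta>)" using X0 eps by simp
        then show ?thesis by (simp add: algebra_simps)
      qed
      also have "\<dots> = V * (real L * r ^ (L - 1) * \<delta> / 2)" by (simp add: mult_ac)
      also have "\<dots> \<le> V * a" using V0 a_ge by (intro mult_left_mono) auto
      finally have fin: "ennreal ((1 - \<epsilon>) * (V / 2) * real L * r ^ (L - 1) * param_sup L N (param_diff (th_of L r) (th_of L s))) \<le> ennreal (a * V)"
        unfolding ps by (intro ennreal_leI) (simp add: mult_ac)
      have goal: "ennreal ((1 - \<epsilon>) * (V / 2) * real L * r ^ (L - 1) * param_sup L N (param_diff (th_of L r) (th_of L s)))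
          \<le> lp_norm M p (qnorm dout q) (\<lambda>x. realize L N (th_of L r) x - realize L N (th_of L s) x)"
        using fin low by (rule order_trans)
      show "\<exists>\<theta>\<in>param_ball q L N r. \<exists>\<theta>'\<in>param_ball q L N r. \<theta> \<noteq> \<theta>' \<and>
            lp_norm M p (qnorm dout q) (\<lambda>x. realize L N \<theta> x - realize L N \<theta>' x)
              \<ge> ennreal ((1 - \<epsilon>) * (V / 2) * real L * r ^ (L - 1) * param_sup L N (param_diff \<theta> \<theta>'))"
        using goal thb thb' neq by blast
    qed
  qed
qed

theorem mainTheorem2:
  fixes din dout :: nat and p q :: ereal
  assumes p: "1 \<le> p" and q: "1 \<le> q"
  shows
   "(\<forall>M nrm. admissible_measure din M \<and> Cp din M p < \<infinity> \<and> is_norm_on dout nrm \<longrightarrow>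
      (\<exists>c>0. \<forall>L N. arch L N din dout \<longrightarrow> (\<forall>r\<ge>1. \<forall>\<theta>\<in>param_ball q L N r. \<forall>\<theta>'\<in>param_ball q L N r.
          lp_norm M p nrm (\<lambda>x. realize L N \<theta> x - realize L N \<theta>' x)
            \<le> ennreal (c * real (width L N) * real L ^ 2 * r ^ (L - 1)
                        * param_sup L N (param_diff \<theta> \<theta>')))))
    \<and> (\<forall>D>0. p = \<infinity> \<longrightarrow>
      (\<forall>L N. arch L N din dout \<longrightarrow> (\<forall>r\<ge>1. \<forall>\<theta>\<in>param_ball q L N r. \<forall>\<theta>'\<in>param_ball q L N r.
          lp_norm (cube_lebesgue din D) p (qnorm dout q) (\<lambda>x. realize L N \<theta> x - realize L N \<theta>' x)
            \<le> ennreal ((D * real din powr inv_exp q + 1) * real (width L N) * real L ^ 2 * r ^ (L - 1)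
                        * param_sup L N (param_diff \<theta> \<theta>')))))
    \<and> (\<forall>D>0. q = \<infinity> \<longrightarrow>
      (\<forall>L N. arch L N din dout \<longrightarrow> (\<forall>r\<ge>1. \<forall>\<theta>\<in>param_ball q L N r. \<forall>\<theta>'\<in>param_ball q L N r.
          lp_norm (cube_lebesgue din D) p (qnorm dout \<infinity>) (\<lambda>x. realize L N \<theta> x - realize L N \<theta>' x)
            \<le> ennreal ((D + 1) * (2 * D) powr (real din * inv_exp p) * real (width L N) * real L ^ 2
                        * r ^ (L - 1) * param_sup L N (param_diff \<theta> \<theta>')))))
    \<and> (\<forall>M. admissible_measure din M \<and> Cp din M p < \<infinity> \<and>
          (\<forall>x\<in>space M. \<forall>i<din. 0 \<le> x i) \<and>
          emeasure M {x \<in> space M. x 0 \<noteq> 0} > 0 \<longrightarrow>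
      (\<exists>c'>0. \<forall>L N. arch L N din dout \<and> (p \<noteq> \<infinity> \<longrightarrow> (\<forall>l\<le>L. N 0 \<le> N l)) \<longrightarrow>
         (\<forall>r\<ge>1. \<forall>\<epsilon>>0. \<exists>\<theta>\<in>param_ball q L N r. \<exists>\<theta>'\<in>param_ball q L N r. \<theta> \<noteq> \<theta>' \<and>
            lp_norm M p (qnorm dout q) (\<lambda>x. realize L N \<theta> x - realize L N \<theta>' x)
              \<ge> ennreal ((1 - \<epsilon>) * c' * real L * r ^ (L - 1)
                          * param_sup L N (param_diff \<theta> \<theta>')))))"
  by (intro conjI part1[OF p q] part2[OF q] part3[OF p] part4[OF p q])


end
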